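(* For every odd integer $n\geq 3$ and every integer $m\geq 2$, the graph $mW_n$ (the disjoint union of $m$ copies of the wheel $W_n$) is $C_3$-supermagic.
   Context: All graphs are finite and simple. For a graph $H$, a graph $G=(V,E)$ has an $H$-covering if every edge of $G$ belongs to a subgraph of $G$ isomorphic to $H$. For such $G$, an $H$-magic labeling is a bijection $\lambda: V\cup E\to\{1,2,\dots,|V|+|E|\}$ for which there is a constant $c$ such that for every subgraph $H'=(V',E')$ of $G$ isomorphic to $H$, $\sum_{v\in V'}\lambda(v)+\sum_{e\in E'}\lambda(e)=c$. It is $H$-supermagic if moreover $\{\lambda(v):v\in V\}=\{1,\dots,|V|\}$; $G$ is $H$-supermagic if it admits such a labeling. $C_k$ is the cycle of length $k$. $mG$ denotes the disjoint union of $m$ copies of $G$. The wheel $W_n=K_1+C_n$ has vertices $c,v_1,\dots,v_n$ and edges $cv_i$ ($1\le i\le n$) and $v_iv_{i+1}$ ($1\le i\le n$, indices modulo $n$). *)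

theory Defs
  imports Main
begin

definition simple_graph :: "'a set \<Rightarrow> 'a set set \<Rightarrow> bool" where
  "simple_graph V E \<longleftrightarrow> finite V \<and>
     (\<forall>e\<in>E. \<exists>u v. e = {u, v} \<and> u \<noteq> v \<and> u \<in> V \<and> v \<in> V)"

definition subgraph :: "'a set \<Rightarrow> 'a set set \<Rightarrow> 'a set \<Rightarrow> 'a set set \<Rightarrow> bool" where
  "subgraph V' E' V E \<longleftrightarrow> V' \<subseteq> V \<and> E' \<subseteq> E \<and> (\<forall>e\<in>E'. e \<subseteq> V')"

definition isomorphic :: "'b set \<Rightarrow> 'b set set \<Rightarrow> 'a set \<Rightarrow> 'a set set \<Rightarrow> bool" where
  "isomorphic VH EH V' E' \<longleftrightarrow>
     (\<exists>f. bij_betw f VH V' \<and> (\<forall>u\<in>VH. \<forall>v\<in>VH. {u, v} \<in> EH \<longleftrightarrow> {f u, f v} \<in> E'))"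

definition H_copy :: "'b set \<Rightarrow> 'b set set \<Rightarrow> 'a set \<Rightarrow> 'a set set \<Rightarrow> 'a set \<Rightarrow> 'a set set \<Rightarrow> bool" where
  "H_copy VH EH V E V' E' \<longleftrightarrow> subgraph V' E' V E \<and> isomorphic VH EH V' E'"

definition H_covering :: "'b set \<Rightarrow> 'b set set \<Rightarrow> 'a set \<Rightarrow> 'a set set \<Rightarrow> bool" where
  "H_covering VH EH V E \<longleftrightarrow> (\<forall>e\<in>E. \<exists>V' E'. H_copy VH EH V E V' E' \<and> e \<in> E')"

definition H_magic_labeling ::
  "'b set \<Rightarrow> 'b set set \<Rightarrow> 'a set \<Rightarrow> 'a set set \<Rightarrow> ('a + 'a set \<Rightarrow> nat) \<Rightarrow> bool" where
  "H_magic_labeling VH EH V E lam \<longleftrightarrow>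
     bij_betw lam (Inl ` V \<union> Inr ` E) {1 .. card V + card E} \<and>
     (\<exists>c. \<forall>V' E'. H_copy VH EH V E V' E' \<longrightarrow>
           (\<Sum>v\<in>V'. lam (Inl v)) + (\<Sum>e\<in>E'. lam (Inr e)) = c)"

definition H_supermagic_labeling ::
  "'b set \<Rightarrow> 'b set set \<Rightarrow> 'a set \<Rightarrow> 'a set set \<Rightarrow> ('a + 'a set \<Rightarrow> nat) \<Rightarrow> bool" where
  "H_supermagic_labeling VH EH V E lam \<longleftrightarrow>
     H_magic_labeling VH EH V E lam \<and> lam ` (Inl ` V) = {1 .. card V}"

definition H_supermagic :: "'b set \<Rightarrow> 'b set set \<Rightarrow> 'a set \<Rightarrow> 'a set set \<Rightarrow> bool" where
  "H_supermagic VH EH V E \<longleftrightarrow>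
     H_covering VH EH V E \<and> (\<exists>lam. H_supermagic_labeling VH EH V E lam)"

definition cycle_V :: "nat \<Rightarrow> nat set" where
  "cycle_V k = {0..<k}"
definition cycle_E :: "nat \<Rightarrow> nat set set" where
  "cycle_E k = {{i, (i + 1) mod k} | i. i < k}"

text \<open>The wheel W_n: centre None, rim vertices Some i (i < n).\<close>
definition wheel_V :: "nat \<Rightarrow> nat option set" where
  "wheel_V n = insert None (Some ` {0..<n})"
definition wheel_E :: "nat \<Rightarrow> nat option set set" where
  "wheel_E n = {{None, Some i} | i. i < n} \<union> {{Some i, Some ((i + 1) mod n)} | i. i < n}"

text \<open>mG: disjoint union of m copies, copy j has vertices (j, v).\<close>
definition copies_V :: "nat \<Rightarrow> 'a set \<Rightarrow> (nat \<times> 'a) set" where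
  "copies_V m V = {0..<m} \<times> V"
definition copies_E :: "nat \<Rightarrow> 'a set set \<Rightarrow> (nat \<times> 'a) set set" where
  "copies_E m E = {(\<lambda>x. (j, x)) ` e | j e. j < m \<and> e \<in> E}"

end

theory Submission
  imports Defs
begin

lemma cycle_V_3: "cycle_V 3 = {0,1,2::nat}"
  unfolding cycle_V_def by auto
lemma lt3: "{..<3::nat} = {0,1,2}" by auto
lemma cycle_E_3: "cycle_E 3 = {{0,1},{1,2},{2,0::nat}}"
proof -
  have "cycle_E 3 = (\<lambda>i. {i, (i+1) mod 3}) ` {..<3}"
    unfolding cycle_E_def by auto
  also have "\<dots> = {{0,1},{1,2},{2,0::nat}}" unfolding lt3 by (simp add: numeral_2_eq_2)
  finally show ?thesis .
qed
lemma a1: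
  assumes hc: "H_copy (cycle_V 3) (cycle_E 3) V E V' E'"
  shows "V' \<subseteq> V" "E' \<subseteq> E" "\<forall>e\<in>E'. e \<subseteq> V'"
    using hc unfolding H_copy_def subgraph_def by auto
lemma a2:
  assumes hc: "H_copy (cycle_V 3) (cycle_E 3) V E V' E'"
  shows "isomorphic {0,1,2::nat} {{0,1},{1,2},{2,0}} V' E'"
    using hc unfolding H_copy_def cycle_V_3 cycle_E_3 by simp

lemma a3:
  assumes bij: "bij_betw f {0,1,2::nat} V'"
  shows "V' = {f 0, f 1, f 2}"
  using bij unfolding bij_betw_def by auto
lemma a4:
  assumes bij: "bij_betw f {0,1,2::nat} V'"
  shows "f 0 \<noteq> f 1" "f 1 \<noteq> f 2" "f 0 \<noteq> f 2"
  using bij unfolding bij_betw_def inj_on_def by force+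
lemma a5:
  assumes fe: "\<forall>u\<in>{0,1,2::nat}. \<forall>v\<in>{0,1,2}. ({u,v} \<in> {{0,1},{1,2},{2,0}}) = ({f u, f v} \<in> E')"
  shows "{f 0, f 1} \<in> E'" "{f 1, f 2} \<in> E'" "{f 0, f 2} \<in> E'"
proof -
  show "{f 0, f 1} \<in> E'" using fe[rule_format, of 0 1] by simp
  show "{f 1, f 2} \<in> E'" using fe[rule_format, of 1 2] by simp
  have "{f 2, f 0} \<in> E'" using fe[rule_format, of 2 0] by simp
  thus "{f 0, f 2} \<in> E'" by (simp add: insert_commute)
qed

lemma a6:
  assumes iso: "isomorphic {0,1,2::nat} {{0,1},{1,2},{2,0}} V' E'"
  obtains f where "bij_betw f {0,1,2::nat} V'"
    "\<forall>u\<in>{0,1,2::nat}. \<forall>v\<in>{0,1,2}. ({u,v} \<in> {{0,1},{1,2},{2,0}}) = ({f u, f v} \<in> E')"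
  using iso unfolding isomorphic_def by blast
lemma a7:
  assumes "u \<in> {p,q,r}" "v \<in> {p,q,r}" "u \<noteq> v"
  shows "{u,v} \<in> {{p,q},{q,r},{p,r}}"
  using assms by (auto simp: insert_commute)

lemma a8:
  assumes "E' \<subseteq> {A,B,C}" "A \<in> E'" "B \<in> E'" "C \<in> E'"
  shows "E' = {A,B,C}"
  using assms by (intro subset_antisym) simp_all
lemma a9:
  assumes simple: "\<forall>e\<in>E. \<exists>u v. e = {u,v} \<and> u \<noteq> v"
   and "E' \<subseteq> E" "\<forall>e\<in>E'. e \<subseteq> V'" "V' = {p,q,r}"
  shows "E' \<subseteq> {{p,q},{q,r},{p,r}}"
proof
  fix e assume eE: "e \<in> E'"
  then have "e \<in> E" using assms(2) by blast
  then obtain u v where uv: "e = {u,v}" "u \<noteq> v" using simple by blast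
  have "e \<subseteq> V'" using eE assms(3) by blast
  hence "u \<in> {p,q,r}" "v \<in> {p,q,r}" using uv(1) assms(4) by auto
  thus "e \<in> {{p,q},{q,r},{p,r}}" using a7 uv by simp
qed

lemma H_copy_tri:
  assumes simple: "\<forall>e\<in>E. \<exists>u v. e = {u,v} \<and> u \<noteq> v"
    and hc: "H_copy (cycle_V 3) (cycle_E 3) V E V' E'"
  shows "\<exists>p q r. p \<noteq> q \<and> q \<noteq> r \<and> p \<noteq> r \<and> p \<in> V \<and> q \<in> V \<and> r \<in> V \<and>
     {p,q} \<in> E \<and> {q,r} \<in> E \<and> {p,r} \<in> E \<and> V' = {p,q,r} \<and> E' = {{p,q},{q,r},{p,r}}"
proof -
  note sub = a1[OF hc]
  obtain f where bij: "bij_betw f {0,1,2::nat} V'"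
    and fe: "\<forall>u\<in>{0,1,2::nat}. \<forall>v\<in>{0,1,2}. ({u,v} \<in> {{0,1},{1,2},{2,0}}) = ({f u, f v} \<in> E')"
    by (rule a6[OF a2[OF hc]])
  note V' = a3[OF bij] and dist = a4[OF bij] and ee = a5[OF fe]
  have E': "E' = {{f 0, f 1},{f 1, f 2},{f 0, f 2}}"
    by (rule a8[OF a9[OF simple sub(2) sub(3) V'] ee])
  have vv: "f 0 \<in> V" "f 1 \<in> V" "f 2 \<in> V" using V' sub(1) by auto
  have eee: "{f 0, f 1} \<in> E" "{f 1, f 2} \<in> E" "{f 0, f 2} \<in> E" using ee sub(2) by auto
  show ?thesis
    apply (rule exI[of _ "f 0"], rule exI[of _ "f 1"], rule exI[of _ "f 2"])
    using dist vv eee V' E' by (intro conjI)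
qed

lemma tri_H_copy:
  assumes d: "p \<noteq> q" "q \<noteq> r" "p \<noteq> r" and v: "p \<in> V" "q \<in> V" "r \<in> V"
    and e: "{p,q} \<in> E" "{q,r} \<in> E" "{p,r} \<in> E"
  shows "H_copy (cycle_V 3) (cycle_E 3) V E {p,q,r} {{p,q},{q,r},{p,r}}"
proof -
  define f where "f = (\<lambda>k::nat. if k = 0 then p else if k = 1 then q else r)"
  have f0: "f 0 = p" and f1: "f (Suc 0) = q" and f2: "f 2 = r" unfolding f_def by auto
  have bij: "bij_betw f {0,1,2} {p,q,r}"
    unfolding bij_betw_def inj_on_def using d f0 f1 f2 by auto
  have iso: "\<forall>u\<in>{0,1,2}. \<forall>v\<in>{0,1,2}. ({u,v} \<in> {{0,1},{1,2},{2,0::nat}}) = ({f u, f v} \<in> {{p,q},{q,r},{p,r}})"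
  proof (intro ballI)
    fix u v :: nat assume u: "u \<in> {0,1,2}" and v: "v \<in> {0,1,2}"
    show "({u,v} \<in> {{0,1},{1,2},{2,0::nat}}) = ({f u, f v} \<in> {{p,q},{q,r},{p,r}})"
      using u v
      apply (elim insertE emptyE; simp add: f0 f1 f2)
      using d by (auto simp: doubleton_eq_iff)
  qed
  have sg: "subgraph {p,q,r} {{p,q},{q,r},{p,r}} V E"
    unfolding subgraph_def using v e by auto
  have im: "isomorphic (cycle_V 3) (cycle_E 3) {p,q,r} {{p,q},{q,r},{p,r}}"
    unfolding isomorphic_def cycle_V_3 cycle_E_3
    using bij iso by blast
  show ?thesis unfolding H_copy_def using sg im by blast
qed

definition cp :: "nat \<Rightarrow> 'a set \<Rightarrow> (nat \<times> 'a) set" where "cp j e = (\<lambda>x. (j,x)) ` e"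

definition lamG :: "(nat \<Rightarrow> 'a \<Rightarrow> nat) \<Rightarrow> (nat \<Rightarrow> 'a set \<Rightarrow> nat) \<Rightarrow> (nat \<times> 'a) + (nat \<times> 'a) set \<Rightarrow> nat" where
  "lamG lv le x = (case x of Inl p \<Rightarrow> lv (fst p) (snd p) | Inr e \<Rightarrow> le (fst (SOME p. p \<in> e)) (snd ` e))"

lemma cp_pair: "cp j {a,b} = {(j,a),(j,b)}" unfolding cp_def by simp

lemma snd_cp: "snd ` cp j e = e" unfolding cp_def by (simp add: image_image)

lemma fst_cp: "p \<in> cp j e \<Longrightarrow> fst p = j" unfolding cp_def by auto

lemma lamG_Inl: "lamG lv le (Inl (j,x)) = lv j x" unfolding lamG_def by simp

lemma lamG_Inr:
  assumes "e0 \<noteq> {}"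
  shows "lamG lv le (Inr (cp j e0)) = le j e0"
proof -
  obtain x where "x \<in> e0" using assms by blast
  hence "(j,x) \<in> cp j e0" unfolding cp_def by blast
  hence "(SOME p. p \<in> cp j e0) \<in> cp j e0" by (rule someI)
  hence "fst (SOME p. p \<in> cp j e0) = j" by (rule fst_cp)
  thus ?thesis unfolding lamG_def by (simp add: snd_cp)
qed

lemma copies_E_mem: "e \<in> copies_E m E \<longleftrightarrow> (\<exists>j e0. j < m \<and> e0 \<in> E \<and> e = cp j e0)"
  unfolding copies_E_def cp_def by blast

lemma cp_inj:
  assumes "e0 \<noteq> {}" "cp j e0 = cp j' e0'"
  shows "j = j' \<and> e0 = e0'"
proof -
  obtain x where x: "x \<in> e0" using assms(1) by blast
  hence "(j,x) \<in> cp j' e0'" using assms(2) unfolding cp_def by blast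
  hence "j = j'" using fst_cp by fastforce
  moreover have "e0 = e0'" using arg_cong[OF assms(2), of "image snd"] by (simp add: snd_cp)
  ultimately show ?thesis by simp
qed

lemma copies_E_alt: "copies_E m E = (\<lambda>(j,e0). cp j e0) ` ({0..<m} \<times> E)"
proof (rule set_eqI)
  fix e
  show "e \<in> copies_E m E \<longleftrightarrow> e \<in> (\<lambda>(j,e0). cp j e0) ` ({0..<m} \<times> E)"
    unfolding copies_E_mem by (auto simp: image_iff)
qed

lemma card_copies_V: "card (copies_V m V) = m * card V"
  unfolding copies_V_def by (simp add: card_cartesian_product)

lemma card_copies_E:
  assumes "\<forall>e\<in>E. e \<noteq> {}"
  shows "card (copies_E m E) = m * card E"
proof -
  have "inj_on (\<lambda>(j,e0). cp j e0) ({0..<m} \<times> E)"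
  proof (rule inj_onI)
    fix x y assume x: "x \<in> {0..<m} \<times> E" and y: "y \<in> {0..<m} \<times> E"
      and eq: "(\<lambda>(j,e0). cp j e0) x = (\<lambda>(j,e0). cp j e0) y"
    obtain j e0 where xe: "x = (j,e0)" by (cases x)
    obtain j' e0' where ye: "y = (j',e0')" by (cases y)
    have "e0 \<noteq> {}" using assms x xe by auto
    moreover have "cp j e0 = cp j' e0'" using eq xe ye by simp
    ultimately have "j = j' \<and> e0 = e0'" by (rule cp_inj)
    thus "x = y" using xe ye by simp
  qed
  hence "card (copies_E m E) = card ({0..<m} \<times> E)"
    unfolding copies_E_alt by (rule card_image)
  thus ?thesis by (simp add: card_cartesian_product)
qed

lemma copies_edge:
  assumes "{p,q} \<in> copies_E m E" "p \<noteq> q"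
  shows "fst p = fst q \<and> fst p < m \<and> {snd p, snd q} \<in> E"
proof -
  obtain j e0 where j: "j < m" "e0 \<in> E" "{p,q} = cp j e0" using assms(1) copies_E_mem by metis
  have "p \<in> cp j e0" "q \<in> cp j e0" using j(3) by blast+
  hence "fst p = j" "fst q = j" using fst_cp by blast+
  moreover have "e0 = {snd p, snd q}" using arg_cong[OF j(3), of "image snd"] by (simp add: snd_cp)
  ultimately show ?thesis using j by simp
qed


lemma generic:
  fixes WV :: "'a set" and WE :: "'a set set" and lv :: "nat \<Rightarrow> 'a \<Rightarrow> nat"
    and le :: "nat \<Rightarrow> 'a set \<Rightarrow> nat" and m K :: nat
  assumes finV: "finite WV" and finE: "finite WE"
    and simple: "\<forall>e\<in>WE. \<exists>u v. e = {u,v} \<and> u \<noteq> v \<and> u \<in> WV \<and> v \<in> WV"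
    and injv: "\<forall>j<m. \<forall>j'<m. \<forall>x\<in>WV. \<forall>x'\<in>WV. lv j x = lv j' x' \<longrightarrow> j = j' \<and> x = x'"
    and inje: "\<forall>j<m. \<forall>j'<m. \<forall>e\<in>WE. \<forall>e'\<in>WE. le j e = le j' e' \<longrightarrow> j = j' \<and> e = e'"
    and rv: "\<forall>j<m. \<forall>x\<in>WV. 1 \<le> lv j x \<and> lv j x \<le> m * card WV"
    and re: "\<forall>j<m. \<forall>e\<in>WE. m * card WV < le j e \<and> le j e \<le> m * card WV + m * card WE"
    and cover: "\<forall>e\<in>WE. \<exists>a b c. e = {a,b} \<and> a \<noteq> b \<and> b \<noteq> c \<and> a \<noteq> c \<and> a \<in> WV \<and> b \<in> WV \<and> c \<in> WV
                 \<and> {a,b} \<in> WE \<and> {b,c} \<in> WE \<and> {a,c} \<in> WE"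
    and magic: "\<forall>j<m. \<forall>a b c. a \<noteq> b \<and> b \<noteq> c \<and> a \<noteq> c \<and> a \<in> WV \<and> b \<in> WV \<and> c \<in> WV
                 \<and> {a,b} \<in> WE \<and> {b,c} \<in> WE \<and> {a,c} \<in> WE \<longrightarrow>
                 lv j a + lv j b + lv j c + le j {a,b} + le j {b,c} + le j {a,c} = K"
  shows "H_supermagic (cycle_V 3) (cycle_E 3) (copies_V m WV) (copies_E m WE)"
proof -
  define V where "V = copies_V m WV"
  define E where "E = copies_E m WE"
  define lam where "lam = lamG lv le"
  define D where "D = Inl ` V \<union> Inr ` E"
  have ne: "\<forall>e\<in>WE. e \<noteq> {}" using simple by blast
  have cV: "card V = m * card WV" unfolding V_def by (rule card_copies_V)
  have cE: "card E = m * card WE" unfolding E_def by (rule card_copies_E[OF ne])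
  have fV: "finite V" unfolding V_def copies_V_def using finV by simp
  have fE: "finite E" unfolding E_def copies_E_alt using finE by simp
  have Vmem: "\<And>p. p \<in> V \<Longrightarrow> fst p < m \<and> snd p \<in> WV" unfolding V_def copies_V_def by auto
  have Emem: "\<And>e. e \<in> E \<Longrightarrow> \<exists>j e0. j < m \<and> e0 \<in> WE \<and> e = cp j e0 \<and> lam (Inr e) = le j e0"
  proof -
    fix e assume "e \<in> E"
    then obtain j e0 where j: "j < m" "e0 \<in> WE" "e = cp j e0" unfolding E_def copies_E_mem by blast
    have "lam (Inr e) = le j e0" unfolding lam_def j(3) by (rule lamG_Inr) (use ne j(2) in blast)
    thus "\<exists>j e0. j < m \<and> e0 \<in> WE \<and> e = cp j e0 \<and> lam (Inr e) = le j e0" using j by blast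
  qed
  have lamV: "\<And>p. lam (Inl p) = lv (fst p) (snd p)" unfolding lam_def lamG_def by simp
  have simpleE: "\<forall>e\<in>E. \<exists>u v. e = {u,v} \<and> u \<noteq> v"
  proof
    fix e assume "e \<in> E"
    then obtain j e0 where j: "j < m" "e0 \<in> WE" "e = cp j e0" unfolding E_def copies_E_mem by blast
    then obtain u v where "e0 = {u,v}" "u \<noteq> v" using simple by blast
    hence "e = {(j,u),(j,v)}" "(j,u) \<noteq> (j,v)" using j(3) by (simp_all add: cp_pair)
    thus "\<exists>u v. e = {u,v} \<and> u \<noteq> v" by blast
  qed
  have rangeV: "\<And>p. p \<in> V \<Longrightarrow> lam (Inl p) \<in> {1..card V}"
    using Vmem rv lamV cV by simp
  have rangeE: "\<And>e. e \<in> E \<Longrightarrow> lam (Inr e) \<in> {card V + 1..card V + card E}"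
  proof -
    fix e assume "e \<in> E"
    then obtain j e0 where j: "j < m" "e0 \<in> WE" "lam (Inr e) = le j e0" using Emem by blast
    have "m * card WV < le j e0 \<and> le j e0 \<le> m * card WV + m * card WE" using re j(1,2) by blast
    thus "lam (Inr e) \<in> {card V + 1..card V + card E}" using j(3) cV cE by auto
  qed
  have injD: "inj_on lam D"
  proof (rule inj_onI)
    fix x y assume x: "x \<in> D" and y: "y \<in> D" and eq: "lam x = lam y"
    show "x = y"
    proof (cases x)
      case (Inl p)
      hence p: "p \<in> V" using x unfolding D_def by auto
      show ?thesis
      proof (cases y)
        case (Inl p')
        hence p': "p' \<in> V" using y unfolding D_def by auto
        have "lv (fst p) (snd p) = lv (fst p') (snd p')" using eq Inl \<open>x = Inl p\<close> lamV by simp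
        hence "fst p = fst p' \<and> snd p = snd p'" using injv Vmem[OF p] Vmem[OF p'] by blast
        thus ?thesis using \<open>x = Inl p\<close> Inl by (simp add: prod_eq_iff)
      next
        case (Inr e)
        hence "e \<in> E" using y unfolding D_def by auto
        hence "lam y \<in> {card V + 1..card V + card E}" using rangeE Inr by simp
        moreover have "lam x \<in> {1..card V}" using rangeV[OF p] \<open>x = Inl p\<close> by simp
        ultimately show ?thesis using eq by simp
      qed
    next
      case (Inr e)
      hence e: "e \<in> E" using x unfolding D_def by auto
      show ?thesis
      proof (cases y)
        case (Inl p)
        hence p: "p \<in> V" using y unfolding D_def by auto
        have "lam y \<in> {1..card V}" using rangeV[OF p] Inl by simp
        moreover have "lam x \<in> {card V + 1..card V + card E}" using rangeE[OF e] \<open>x = Inr e\<close> by simp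
        ultimately show ?thesis using eq by simp
      next
        case (Inr e')
        hence e': "e' \<in> E" using y unfolding D_def by auto
        obtain j e0 where j: "j < m" "e0 \<in> WE" "e = cp j e0" "lam (Inr e) = le j e0" using Emem[OF e] by blast
        obtain j' e0' where j': "j' < m" "e0' \<in> WE" "e' = cp j' e0'" "lam (Inr e') = le j' e0'" using Emem[OF e'] by blast
        have "le j e0 = le j' e0'" using eq j(4) j'(4) \<open>x = Inr e\<close> Inr by simp
        hence "j = j' \<and> e0 = e0'" using inje j(1,2) j'(1,2) by blast
        thus ?thesis using j(3) j'(3) \<open>x = Inr e\<close> Inr by simp
      qed
    qed
  qed
  have fD: "finite D" unfolding D_def using fV fE by simp
  have cD: "card D = card V + card E"
  proof -
    have disj: "(Inl ` V :: ((nat \<times> 'a) + (nat \<times> 'a) set) set) \<inter> Inr ` E = {}" by blast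
    have "card D = card (Inl ` V :: ((nat \<times> 'a) + (nat \<times> 'a) set) set) + card (Inr ` E :: ((nat \<times> 'a) + (nat \<times> 'a) set) set)"
      unfolding D_def by (rule card_Un_disjoint) (simp_all add: fV fE disj)
    also have "\<dots> = card V + card E" by (simp add: card_image)
    finally show ?thesis .
  qed
  have imgD: "lam ` D \<subseteq> {1..card V + card E}"
  proof
    fix l assume "l \<in> lam ` D"
    then obtain x where x: "x \<in> D" "l = lam x" by blast
    show "l \<in> {1..card V + card E}"
    proof (cases x)
      case (Inl p) thus ?thesis using x rangeV unfolding D_def by fastforce
    next
      case (Inr e) thus ?thesis using x rangeE unfolding D_def by fastforce
    qed
  qed
  have bijD: "bij_betw lam D {1..card V + card E}"
  proof -
    have "card (lam ` D) = card {1..card V + card E}" using card_image[OF injD] cD by simp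
    hence "lam ` D = {1..card V + card E}" using card_subset_eq[OF _ imgD] by simp
    thus ?thesis using injD unfolding bij_betw_def by simp
  qed
  have imgV: "lam ` (Inl ` V) = {1..card V}"
  proof -
    have sub: "lam ` (Inl ` V) \<subseteq> {1..card V}" using rangeV by auto
    have "inj_on lam (Inl ` V)" using injD unfolding D_def by (rule inj_on_subset) auto
    hence "card (lam ` (Inl ` V)) = card V" by (simp add: card_image)
    thus ?thesis using card_subset_eq[OF _ sub] by simp
  qed
  have magicE: "\<forall>V' E'. H_copy (cycle_V 3) (cycle_E 3) V E V' E' \<longrightarrow>
           (\<Sum>v\<in>V'. lam (Inl v)) + (\<Sum>e\<in>E'. lam (Inr e)) = K"
  proof (intro allI impI)
    fix V' E' assume hc: "H_copy (cycle_V 3) (cycle_E 3) V E V' E'"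
    obtain p q r where pqr: "p \<noteq> q" "q \<noteq> r" "p \<noteq> r" "p \<in> V" "q \<in> V" "r \<in> V"
      "{p,q} \<in> E" "{q,r} \<in> E" "{p,r} \<in> E" "V' = {p,q,r}" "E' = {{p,q},{q,r},{p,r}}"
      using H_copy_tri[OF simpleE hc] by blast
    have c1: "fst p = fst q \<and> fst p < m \<and> {snd p, snd q} \<in> WE" using copies_edge pqr(1,7) unfolding E_def by blast
    have c2: "fst q = fst r \<and> fst q < m \<and> {snd q, snd r} \<in> WE" using copies_edge pqr(2,8) unfolding E_def by blast
    have c3: "fst p = fst r \<and> fst p < m \<and> {snd p, snd r} \<in> WE" using copies_edge pqr(3,9) unfolding E_def by blast
    define j a b c where "j = fst p" and "a = snd p" and "b = snd q" and "c = snd r"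
    have pj: "p = (j,a)" "q = (j,b)" "r = (j,c)" using c1 c2 unfolding j_def a_def b_def c_def by (auto simp: prod_eq_iff)
    have jm: "j < m" using c1 j_def by simp
    have abc: "a \<noteq> b" "b \<noteq> c" "a \<noteq> c" using pqr(1,2,3) pj by auto
    have inV: "a \<in> WV" "b \<in> WV" "c \<in> WV" using Vmem pqr(4,5,6) unfolding a_def b_def c_def by auto
    have inE: "{a,b} \<in> WE" "{b,c} \<in> WE" "{a,c} \<in> WE" using c1 c2 c3 unfolding a_def b_def c_def by auto
    have sV: "(\<Sum>v\<in>V'. lam (Inl v)) = lv j a + lv j b + lv j c"
      using pqr(1,2,3) unfolding pqr(10) by (simp add: lamV pj)
    have l1: "lam (Inr {p,q}) = le j {a,b}"
    proof -
      have "{p,q} = cp j {a,b}" using pj by (simp add: cp_pair)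
      thus ?thesis unfolding lam_def by (simp add: lamG_Inr)
    qed
    have l2: "lam (Inr {q,r}) = le j {b,c}"
    proof -
      have "{q,r} = cp j {b,c}" using pj by (simp add: cp_pair)
      thus ?thesis unfolding lam_def by (simp add: lamG_Inr)
    qed
    have l3: "lam (Inr {p,r}) = le j {a,c}"
    proof -
      have "{p,r} = cp j {a,c}" using pj by (simp add: cp_pair)
      thus ?thesis unfolding lam_def by (simp add: lamG_Inr)
    qed
    have d1: "{p,q} \<noteq> {q,r}" using pqr(1,2,3) by (auto simp: doubleton_eq_iff)
    have d2: "{p,q} \<noteq> {p,r}" using pqr(1,2,3) by (auto simp: doubleton_eq_iff)
    have d3: "{q,r} \<noteq> {p,r}" using pqr(1,2,3) by (auto simp: doubleton_eq_iff)
    have sE: "(\<Sum>e\<in>E'. lam (Inr e)) = le j {a,b} + le j {b,c} + le j {a,c}"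
      unfolding pqr(11) using d1 d2 d3 l1 l2 l3 by simp
    have "lv j a + lv j b + lv j c + le j {a,b} + le j {b,c} + le j {a,c} = K"
      by (rule magic[rule_format, OF jm]) (intro conjI; fact)
    thus "(\<Sum>v\<in>V'. lam (Inl v)) + (\<Sum>e\<in>E'. lam (Inr e)) = K"
      unfolding sV sE by linarith
  qed
  have covE: "H_covering (cycle_V 3) (cycle_E 3) V E"
    unfolding H_covering_def
  proof
    fix e assume "e \<in> E"
    then obtain j e0 where j: "j < m" "e0 \<in> WE" "e = cp j e0" unfolding E_def copies_E_mem by blast
    obtain a b c where abc0: "e0 = {a,b} \<and> a \<noteq> b \<and> b \<noteq> c \<and> a \<noteq> c \<and> a \<in> WV \<and> b \<in> WV \<and> c \<in> WV
       \<and> {a,b} \<in> WE \<and> {b,c} \<in> WE \<and> {a,c} \<in> WE"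
      using bspec[OF cover j(2)] by (elim exE) (rule that)
    note abc = abc0[THEN conjunct1] abc0[THEN conjunct2, THEN conjunct1]
      abc0[THEN conjunct2, THEN conjunct2, THEN conjunct1]
      abc0[THEN conjunct2, THEN conjunct2, THEN conjunct2, THEN conjunct1]
      abc0[THEN conjunct2, THEN conjunct2, THEN conjunct2, THEN conjunct2, THEN conjunct1]
      abc0[THEN conjunct2, THEN conjunct2, THEN conjunct2, THEN conjunct2, THEN conjunct2, THEN conjunct1]
      abc0[THEN conjunct2, THEN conjunct2, THEN conjunct2, THEN conjunct2, THEN conjunct2, THEN conjunct2, THEN conjunct1]
      abc0[THEN conjunct2, THEN conjunct2, THEN conjunct2, THEN conjunct2, THEN conjunct2, THEN conjunct2, THEN conjunct2, THEN conjunct1]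
      abc0[THEN conjunct2, THEN conjunct2, THEN conjunct2, THEN conjunct2, THEN conjunct2, THEN conjunct2, THEN conjunct2, THEN conjunct2, THEN conjunct1]
      abc0[THEN conjunct2, THEN conjunct2, THEN conjunct2, THEN conjunct2, THEN conjunct2, THEN conjunct2, THEN conjunct2, THEN conjunct2, THEN conjunct2]
    have inV: "(j,a) \<in> V" "(j,b) \<in> V" "(j,c) \<in> V" using j(1) abc unfolding V_def copies_V_def by auto
    have inE: "{(j,a),(j,b)} \<in> E" "{(j,b),(j,c)} \<in> E" "{(j,a),(j,c)} \<in> E"
    proof -
      have "cp j {a,b} \<in> copies_E m WE" "cp j {b,c} \<in> copies_E m WE" "cp j {a,c} \<in> copies_E m WE"
        using j(1) abc(8,9,10) unfolding copies_E_mem by blast+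
      thus "{(j,a),(j,b)} \<in> E" "{(j,b),(j,c)} \<in> E" "{(j,a),(j,c)} \<in> E" unfolding E_def by (simp_all add: cp_pair)
    qed
    have "H_copy (cycle_V 3) (cycle_E 3) V E {(j,a),(j,b),(j,c)} {{(j,a),(j,b)},{(j,b),(j,c)},{(j,a),(j,c)}}"
      by (rule tri_H_copy) (use abc inV inE in auto)
    moreover have "e \<in> {{(j,a),(j,b)},{(j,b),(j,c)},{(j,a),(j,c)}}" using j(3) abc(1) by (simp add: cp_pair)
    ultimately show "\<exists>V' E'. H_copy (cycle_V 3) (cycle_E 3) V E V' E' \<and> e \<in> E'" by blast
  qed
  show ?thesis
    unfolding H_supermagic_def H_supermagic_labeling_def H_magic_labeling_def
    using covE bijD imgV magicE unfolding V_def E_def D_def lam_def by blast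
qed

definition esum :: "nat option set \<Rightarrow> nat" where
  "esum e = (\<Sum>x\<in>e. case x of None \<Rightarrow> 0 | Some k \<Rightarrow> k)"

definition betaW :: "nat \<Rightarrow> nat \<Rightarrow> nat" where
  "betaW n i = (if even i then (n - 1) div 2 - i div 2 else n - (i + 1) div 2)"

definition LVw :: "nat \<Rightarrow> nat option \<Rightarrow> nat" where
  "LVw n x = (case x of None \<Rightarrow> n | Some i \<Rightarrow> i)"

definition LEw :: "nat \<Rightarrow> nat option set \<Rightarrow> nat" where
  "LEw n e = (if None \<in> e then n + 1 + betaW n (esum e)
              else 3 * n - (if esum e = n - 1 then 0 else (esum e + 1) div 2))"

lemma esum_spoke: "esum {None, Some i} = i"
  unfolding esum_def by simp

lemma esum_spoke': "esum {Some i, None} = i"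
  unfolding esum_def by simp

lemma esum_rim: "x \<noteq> y \<Longrightarrow> esum {Some x, Some y} = x + y"
  unfolding esum_def by simp

lemma LEw_spoke: "LEw n {None, Some i} = n + 1 + betaW n i"
  unfolding LEw_def by (simp add: esum_spoke)

lemma LEw_spoke': "LEw n {Some i, None} = n + 1 + betaW n i"
  unfolding LEw_def by (simp add: esum_spoke')

lemma LEw_rim: "x \<noteq> y \<Longrightarrow> LEw n {Some x, Some y} =
   3 * n - (if x + y = n - 1 then 0 else (x + y + 1) div 2)"
  unfolding LEw_def by (simp add: esum_rim)

lemma mod_succ: "(x::nat) < n \<Longrightarrow> (x + 1) mod n = (if x + 1 = n then 0 else x + 1)"
proof (cases "x + 1 = n")
  case True thus ?thesis by (metis mod_self)
next
  case False assume "x < n" thus ?thesis using False by simp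
qed

lemma betaW_even: "betaW n (2 * t) = (n - 1) div 2 - t"
  unfolding betaW_def by simp

lemma betaW_odd: "betaW n (2 * t + 1) = n - (t + 1)"
  unfolding betaW_def by simp

lemma betaW_odd': "betaW n (Suc (2 * t)) = n - Suc t"
  using betaW_odd[of n t] by simp

lemma betaW_even2: "betaW n (Suc (Suc (2 * t))) = (n - 1) div 2 - Suc t"
  using betaW_even[of n "Suc t"] by simp

lemma betaW_bound:
  assumes "n = 2 * q + 1" "i < n"
  shows "betaW n i < n"
proof (cases "even i")
  case True then obtain t where "i = 2 * t" by blast
  thus ?thesis using assms by (simp add: betaW_even betaW_even2)
next
  case False then obtain t where "i = 2 * t + 1" using oddE by blast
  thus ?thesis using assms by (simp add: betaW_odd')
qed

lemma betaW_cases: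
  assumes "n = 2 * q + 1" "i < n"
  shows "(even i \<and> betaW n i \<le> q) \<or> (odd i \<and> q < betaW n i)"
proof (cases "even i")
  case True then obtain t where "i = 2 * t" by blast
  thus ?thesis using assms by (simp add: betaW_even betaW_even2)
next
  case False then obtain t where t: "i = 2 * t + 1" using oddE by blast
  hence "t < q" using assms by simp
  thus ?thesis using assms t by (simp add: betaW_odd')
qed

lemma betaW_inj:
  assumes "n = 2 * q + 1" "i < n" "k < n" "betaW n i = betaW n k"
  shows "i = k"
proof -
  have pi: "even i = even k" using betaW_cases[OF assms(1,2)] betaW_cases[OF assms(1,3)] assms(4) by auto
  show ?thesis
  proof (cases "even i")
    case True
    then obtain t where t: "i = 2 * t" by blast
    obtain s where s: "k = 2 * s" using True pi by blast
    show ?thesis using assms t s by (simp add: betaW_even betaW_even2)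
  next
    case False
    then obtain t where t: "i = 2 * t + 1" using oddE by blast
    obtain s where s: "k = 2 * s + 1" using False pi oddE by metis
    show ?thesis using assms t s by (simp add: betaW_odd')
  qed
qed

lemma rim_level:
  assumes "n = 2 * q + 1" "q \<ge> 1" "x < n"
  shows "LEw n {Some x, Some ((x + 1) mod n)} = (if x + 1 = n then 3 * n else 3 * n - (x + 1))"
proof (cases "x + 1 = n")
  case True
  hence "(x + 1) mod n = 0" by simp
  moreover have "x \<noteq> 0" using True assms by simp
  ultimately show ?thesis using True assms by (simp add: LEw_rim)
next
  case False
  hence m: "(x + 1) mod n = x + 1" using assms by simp
  have "x + (x + 1) \<noteq> n - 1" using assms by presburger
  thus ?thesis using False m by (simp add: LEw_rim)
qed

lemma key_level:
  assumes "n = 2 * q + 1" "q \<ge> 1" "x < n"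
  shows "x + (x + 1) mod n + betaW n x + betaW n ((x + 1) mod n) + LEw n {Some x, Some ((x + 1) mod n)}
         = 3 * q + 3 * n"
proof (cases "x + 1 = n")
  case True
  hence x: "x = 2 * q" using assms by simp
  have "(x + 1) mod n = 0" using True by simp
  moreover have "betaW n x = 0" using x assms by (simp add: betaW_even betaW_even2)
  moreover have "betaW n 0 = q" using assms by (simp add: betaW_def)
  ultimately show ?thesis using rim_level[OF assms] True x by simp
next
  case False
  hence m: "(x + 1) mod n = x + 1" using assms by simp
  have r: "LEw n {Some x, Some ((x + 1) mod n)} = 3 * n - (x + 1)" using rim_level[OF assms] False by simp
  show ?thesis
  proof (cases "even x")
    case True
    then obtain t where t: "x = 2 * t" by blast
    have "betaW n (x + 1) = n - (t + 1)" using t betaW_odd by simp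
    moreover have "betaW n x = q - t" using t assms by (simp add: betaW_even betaW_even2)
    moreover have "t \<le> q" using t assms by simp
    ultimately show ?thesis using m r t assms by simp
  next
    case False
    then obtain t where t: "x = 2 * t + 1" using oddE by blast
    have "x + 1 = 2 * (t + 1)" using t by simp
    hence "betaW n (x + 1) = q - (t + 1)" using assms by (simp add: betaW_even betaW_even2)
    moreover have "betaW n x = n - (t + 1)" using t betaW_odd by simp
    moreover have "t + 1 \<le> q" using t assms \<open>x + 1 \<noteq> n\<close> by simp
    ultimately show ?thesis using m r t assms by simp
  qed
qed

lemma wheel_E_mem: "e \<in> wheel_E n \<longleftrightarrow> (\<exists>i<n. e = {None, Some i}) \<or> (\<exists>i<n. e = {Some i, Some ((i+1) mod n)})"
  unfolding wheel_E_def by blast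

lemma wheel_V_mem: "x \<in> wheel_V n \<longleftrightarrow> x = None \<or> (\<exists>i<n. x = Some i)"
  unfolding wheel_V_def by auto

lemma finite_wheel_V: "finite (wheel_V n)"
  unfolding wheel_V_def by simp

lemma wheel_E_alt: "wheel_E n = (\<lambda>i. {None, Some i}) ` {..<n} \<union> (\<lambda>i. {Some i, Some ((i+1) mod n)}) ` {..<n}"
  unfolding wheel_E_def by auto

lemma finite_wheel_E: "finite (wheel_E n)"
  unfolding wheel_E_alt by simp

lemma card_wheel_V: "card (wheel_V n) = n + 1"
proof -
  have "card (Some ` {0..<n}) = n" by (simp add: card_image)
  thus ?thesis unfolding wheel_V_def by simp
qed

lemma rim_inj:
  assumes "(n::nat) = 2 * q + 1" "q \<ge> 1" "i < n" "k < n"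
    and "{Some i, Some ((i+1) mod n)} = {Some k, Some ((k+1) mod n)}"
  shows "i = k"
proof -
  have "LEw n {Some i, Some ((i+1) mod n)} = LEw n {Some k, Some ((k+1) mod n)}" using assms(5) by simp
  hence "(if i + 1 = n then 3 * n else 3 * n - (i + 1)) = (if k + 1 = n then 3 * n else 3 * n - (k + 1))"
    using rim_level[OF assms(1,2,3)] rim_level[OF assms(1,2,4)] by simp
  thus ?thesis using assms(3,4) by (auto split: if_splits)
qed

lemma card_wheel_E:
  assumes "n = 2 * q + 1" "q \<ge> 1"
  shows "card (wheel_E n) = 2 * n"
proof -
  have c1: "card ((\<lambda>i. {None, Some i}) ` {..<n}) = n"
    by (subst card_image) (auto simp: inj_on_def doubleton_eq_iff)
  have c2: "card ((\<lambda>i. {Some i, Some ((i+1) mod n)}) ` {..<n}) = n"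
  proof (subst card_image)
    show "inj_on (\<lambda>i. {Some i, Some ((i+1) mod n)}) {..<n}"
    proof (rule inj_onI)
      fix i k assume "i \<in> {..<n}" "k \<in> {..<n}" "{Some i, Some ((i+1) mod n)} = {Some k, Some ((k+1) mod n)}"
      thus "i = k" using rim_inj[OF assms] by blast
    qed
  qed simp
  have d: "(\<lambda>i. {None, Some i}) ` {..<n} \<inter> (\<lambda>i. {Some i, Some ((i+1) mod n)}) ` {..<n} = {}"
    by auto
  show ?thesis unfolding wheel_E_alt
    by (subst card_Un_disjoint) (use c1 c2 d in auto)
qed

lemma rim_edge:
  assumes "{Some x, Some y} \<in> wheel_E n"
  shows "x < n \<and> y < n \<and> (y = (x+1) mod n \<or> x = (y+1) mod n)"
proof -
  from assms obtain i where i: "i < n" "{Some x, Some y} = {Some i, Some ((i+1) mod n)}"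
    unfolding wheel_E_mem by (auto simp: doubleton_eq_iff)
  have "(x = i \<and> y = (i+1) mod n) \<or> (x = (i+1) mod n \<and> y = i)" using i(2) by (auto simp: doubleton_eq_iff)
  moreover have "(i+1) mod n < n" using i(1) by simp
  ultimately show ?thesis using i(1) by auto
qed

lemma spoke_edge:
  assumes "{None, Some x} \<in> wheel_E n"
  shows "x < n"
proof -
  from assms obtain i where "i < n" "{None, Some x} = {None, Some i}"
    unfolding wheel_E_mem by (auto simp: doubleton_eq_iff)
  thus ?thesis by (auto simp: doubleton_eq_iff)
qed

lemma adj_lin:
  assumes "(x::nat) < n \<and> y < n \<and> (y = (x+1) mod n \<or> x = (y+1) mod n)"
  shows "y = x + 1 \<or> x = y + 1 \<or> (x + 1 = n \<and> y = 0) \<or> (y + 1 = n \<and> x = 0)"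
proof -
  have x: "(x+1) mod n = (if x + 1 = n then 0 else x + 1)" using assms mod_succ by blast
  have y: "(y+1) mod n = (if y + 1 = n then 0 else y + 1)" using assms mod_succ by blast
  show ?thesis using assms unfolding x y by (auto split: if_splits)
qed

lemma no_rim_tri:
  assumes "(n::nat) \<ge> 4" "x \<noteq> y" "y \<noteq> z" "x \<noteq> z"
    and a1: "x < n \<and> y < n \<and> (y = (x+1) mod n \<or> x = (y+1) mod n)"
    and a2: "y < n \<and> z < n \<and> (z = (y+1) mod n \<or> y = (z+1) mod n)"
    and a3: "x < n \<and> z < n \<and> (z = (x+1) mod n \<or> x = (z+1) mod n)"
  shows False
proof -
  note b1 = adj_lin[OF a1] and b2 = adj_lin[OF a2] and b3 = adj_lin[OF a3]
  show False using b1 b2 b3 assms(1,2,3,4) by (elim disjE conjE; linarith)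
qed

lemma mdm:
  assumes "(m::nat) * a + j = m * b + j'" "j < m" "j' < m"
  shows "a = b \<and> j = j'"
proof -
  have "a = b"
  proof (rule ccontr)
    assume "a \<noteq> b"
    hence "a + 1 \<le> b \<or> b + 1 \<le> a" by auto
    thus False
    proof
      assume "a + 1 \<le> b" hence "m * (a+1) \<le> m * b" by (rule mult_le_mono2)
      thus False using assms by (simp add: algebra_simps)
    next
      assume "b + 1 \<le> a" hence "m * (b+1) \<le> m * a" by (rule mult_le_mono2)
      thus False using assms by (simp add: algebra_simps)
    qed
  qed
  thus ?thesis using assms by simp
qed

lemma spoke_lv:
  assumes "n = 2 * q + 1" "i < n"
  shows "LEw n {None, Some i} = n + 1 + betaW n i" "betaW n i < n"
  using LEw_spoke betaW_bound[OF assms] by auto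

lemma LEw_range:
  assumes "n = 2 * q + 1" "q \<ge> 1" "e \<in> wheel_E n"
  shows "n + 1 \<le> LEw n e \<and> LEw n e \<le> 3 * n"
proof -
  from assms(3) have "(\<exists>i<n. e = {None, Some i}) \<or> (\<exists>i<n. e = {Some i, Some ((i+1) mod n)})"
    unfolding wheel_E_mem .
  thus ?thesis
  proof
    assume "\<exists>i<n. e = {None, Some i}"
    then obtain i where i: "i < n" "e = {None, Some i}" by blast
    show ?thesis using spoke_lv[OF assms(1) i(1)] i(2) by simp
  next
    assume "\<exists>i<n. e = {Some i, Some ((i+1) mod n)}"
    then obtain i where i: "i < n" "e = {Some i, Some ((i+1) mod n)}" by blast
    have lv: "LEw n e = (if i + 1 = n then 3 * n else 3 * n - (i + 1))" using rim_level[OF assms(1,2) i(1)] i(2) by simp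
    show ?thesis
    proof (cases "i + 1 = n")
      case True thus ?thesis using lv by simp
    next
      case False
      hence "LEw n e = 3 * n - (i + 1)" using lv by simp
      thus ?thesis using i(1) False by arith
    qed
  qed
qed

lemma LEw_inj:
  assumes n: "n = 2 * q + 1" "q \<ge> 1" and e: "e \<in> wheel_E n" "e' \<in> wheel_E n"
    and eq: "LEw n e = LEw n e'"
  shows "e = e'"
proof -
  from e(1) have c1: "(\<exists>i<n. e = {None, Some i}) \<or> (\<exists>i<n. e = {Some i, Some ((i+1) mod n)})"
    unfolding wheel_E_mem .
  from e(2) have c2: "(\<exists>i<n. e' = {None, Some i}) \<or> (\<exists>i<n. e' = {Some i, Some ((i+1) mod n)})"
    unfolding wheel_E_mem .
  show ?thesis
  proof (cases "\<exists>i<n. e = {None, Some i}")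
    case True
    then obtain i where i: "i < n" "e = {None, Some i}" by blast
    note si = spoke_lv[OF n(1) i(1)]
    show ?thesis
    proof (cases "\<exists>k<n. e' = {None, Some k}")
      case True
      then obtain k where k: "k < n" "e' = {None, Some k}" by blast
      note sk = spoke_lv[OF n(1) k(1)]
      have "betaW n i = betaW n k" using eq i(2) k(2) si sk by simp
      hence "i = k" using betaW_inj[OF n(1) i(1) k(1)] by simp
      thus ?thesis using i k by simp
    next
      case False
      then obtain k where k: "k < n" "e' = {Some k, Some ((k+1) mod n)}" using c2 by blast
      note rk = rim_level[OF n k(1)]
      have "LEw n e \<le> 2 * n" using si i n by simp
      moreover have "LEw n e' > 2 * n" using rk k n by auto
      ultimately show ?thesis using eq by simp
    qed
  next
    case False
    then obtain i where i: "i < n" "e = {Some i, Some ((i+1) mod n)}" using c1 by blast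
    note ri = rim_level[OF n i(1)]
    show ?thesis
    proof (cases "\<exists>k<n. e' = {None, Some k}")
      case True
      then obtain k where k: "k < n" "e' = {None, Some k}" by blast
      note sk = spoke_lv[OF n(1) k(1)]
      have "LEw n e' \<le> 2 * n" using sk k n by simp
      moreover have "LEw n e > 2 * n" using ri i n by auto
      ultimately show ?thesis using eq by simp
    next
      case False
      then obtain k where k: "k < n" "e' = {Some k, Some ((k+1) mod n)}" using c2 by blast
      note rk = rim_level[OF n k(1)]
      have "(if i + 1 = n then 3 * n else 3 * n - (i + 1)) = (if k + 1 = n then 3 * n else 3 * n - (k + 1))"
        using eq i(2) k(2) ri rk by simp
      hence "i = k" using i(1) k(1) by (auto split: if_splits)
      thus ?thesis using i k by simp
    qed
  qed
qed

lemma key_sym: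
  assumes n: "n = 2 * q + 1" "q \<ge> 1"
    and adj: "x < n \<and> y < n \<and> (y = (x+1) mod n \<or> x = (y+1) mod n)"
  shows "n + x + y + LEw n {None, Some x} + LEw n {None, Some y} + LEw n {Some x, Some y} = 6 * n + 3 * q + 2"
proof -
  have xl: "x < n" and yl: "y < n" using adj by auto
  from adj have "y = (x+1) mod n \<or> x = (y+1) mod n" by simp
  thus ?thesis
  proof
    assume y: "y = (x+1) mod n"
    have "x + y + betaW n x + betaW n y + LEw n {Some x, Some y} = 3 * q + 3 * n"
      using key_level[OF n xl] y by simp
    thus ?thesis using LEw_spoke[of n x] LEw_spoke[of n y] by simp
  next
    assume x: "x = (y+1) mod n"
    have "y + x + betaW n y + betaW n x + LEw n {Some y, Some x} = 3 * q + 3 * n"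
      using key_level[OF n yl] x by simp
    moreover have "{Some y, Some x} = {Some x, Some y}" by blast
    ultimately show ?thesis using LEw_spoke[of n x] LEw_spoke[of n y] by simp
  qed
qed

lemma tri_levels:
  assumes n: "n = 2 * q + 1" "q \<ge> 2"
    and abc: "a \<noteq> b" "b \<noteq> c" "a \<noteq> c" "a \<in> wheel_V n" "b \<in> wheel_V n" "c \<in> wheel_V n"
    and edges: "{a,b} \<in> wheel_E n" "{b,c} \<in> wheel_E n" "{a,c} \<in> wheel_E n"
  shows "LVw n a + LVw n b + LVw n c + LEw n {a,b} + LEw n {b,c} + LEw n {a,c} = 6 * n + 3 * q + 2"
proof -
  have n1: "q \<ge> 1" using n by simp
  have n4: "n \<ge> 4" using n by simp
  have ex: "a = None \<or> b = None \<or> c = None"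
  proof (rule ccontr)
    assume "\<not> (a = None \<or> b = None \<or> c = None)"
    then obtain x y z where xyz: "a = Some x" "b = Some y" "c = Some z" by auto
    show False
      using no_rim_tri[OF n4, of x y z] rim_edge[of x y n] rim_edge[of y z n] rim_edge[of x z n]
        edges abc(1,2,3) xyz by auto
  qed
  show ?thesis
  proof (cases "a = None")
    case True
    obtain x where x: "b = Some x" using abc(1) True by (cases b) auto
    obtain y where y: "c = Some y" using abc(3) True by (cases c) auto
    have adj: "x < n \<and> y < n \<and> (y = (x+1) mod n \<or> x = (y+1) mod n)"
      using rim_edge[of x y n] edges(2) x y by simp
    show ?thesis using key_sym[OF n(1) n1 adj] True x y by (simp add: LVw_def)
  next
    case False
    show ?thesis
    proof (cases "b = None")
      case True
      obtain x where x: "a = Some x" using False by (cases a) auto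
      obtain y where y: "c = Some y" using abc(2) True by (cases c) auto
      have adj: "x < n \<and> y < n \<and> (y = (x+1) mod n \<or> x = (y+1) mod n)"
        using rim_edge[of x y n] edges(3) x y by simp
      have "{Some x, None} = {None, Some x}" by blast
      thus ?thesis using key_sym[OF n(1) n1 adj] True x y by (simp add: LVw_def)
    next
      case False2: False
      have cN: "c = None" using ex False False2 by simp
      obtain x where x: "a = Some x" using False by (cases a) auto
      obtain y where y: "b = Some y" using False2 by (cases b) auto
      have adj: "x < n \<and> y < n \<and> (y = (x+1) mod n \<or> x = (y+1) mod n)"
        using rim_edge[of x y n] edges(1) x y by simp
      have "{Some x, None} = {None, Some x}" "{Some y, None} = {None, Some y}" by blast+
      thus ?thesis using key_sym[OF n(1) n1 adj] cN x y by (simp add: LVw_def)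
    qed
  qed
qed

definition lvG :: "nat \<Rightarrow> nat \<Rightarrow> nat \<Rightarrow> nat option \<Rightarrow> nat" where
  "lvG m n j x = m * LVw n x + j + 1"

definition leG :: "nat \<Rightarrow> nat \<Rightarrow> nat \<Rightarrow> nat option set \<Rightarrow> nat" where
  "leG m n j e = m * LEw n e + (m - j)"

lemma LVw_range: "x \<in> wheel_V n \<Longrightarrow> LVw n x \<le> n"
  unfolding wheel_V_mem LVw_def by auto

lemma LVw_inj: "x \<in> wheel_V n \<Longrightarrow> x' \<in> wheel_V n \<Longrightarrow> LVw n x = LVw n x' \<Longrightarrow> x = x'"
  unfolding wheel_V_mem LVw_def by auto

lemma wheel_simple:
  assumes "n \<ge> 2"
  shows "\<forall>e\<in>wheel_E n. \<exists>u v. e = {u,v} \<and> u \<noteq> v \<and> u \<in> wheel_V n \<and> v \<in> wheel_V n"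
proof
  fix e assume "e \<in> wheel_E n"
  hence "(\<exists>i<n. e = {None, Some i}) \<or> (\<exists>i<n. e = {Some i, Some ((i+1) mod n)})" unfolding wheel_E_mem .
  thus "\<exists>u v. e = {u,v} \<and> u \<noteq> v \<and> u \<in> wheel_V n \<and> v \<in> wheel_V n"
  proof
    assume "\<exists>i<n. e = {None, Some i}"
    then obtain i where i: "i < n" "e = {None, Some i}" by blast
    have "None \<in> wheel_V n" "Some i \<in> wheel_V n" using i(1) unfolding wheel_V_mem by auto
    thus ?thesis using i(2) by blast
  next
    assume "\<exists>i<n. e = {Some i, Some ((i+1) mod n)}"
    then obtain i where i: "i < n" "e = {Some i, Some ((i+1) mod n)}" by blast
    have ne: "i \<noteq> (i+1) mod n" using i(1) assms mod_succ[OF i(1)] by auto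
    have "(i+1) mod n < n" using i(1) by simp
    hence "Some i \<in> wheel_V n" "Some ((i+1) mod n) \<in> wheel_V n" using i(1) unfolding wheel_V_mem by auto
    thus ?thesis using i(2) ne by blast
  qed
qed

lemma wheel_cover:
  assumes "n \<ge> 2"
  shows "\<forall>e\<in>wheel_E n. \<exists>a b c. e = {a,b} \<and> a \<noteq> b \<and> b \<noteq> c \<and> a \<noteq> c \<and> a \<in> wheel_V n \<and> b \<in> wheel_V n \<and> c \<in> wheel_V n
                 \<and> {a,b} \<in> wheel_E n \<and> {b,c} \<in> wheel_E n \<and> {a,c} \<in> wheel_E n"
proof
  fix e assume eE: "e \<in> wheel_E n"
  hence "(\<exists>i<n. e = {None, Some i}) \<or> (\<exists>i<n. e = {Some i, Some ((i+1) mod n)})" unfolding wheel_E_mem .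
  thus "\<exists>a b c. e = {a,b} \<and> a \<noteq> b \<and> b \<noteq> c \<and> a \<noteq> c \<and> a \<in> wheel_V n \<and> b \<in> wheel_V n \<and> c \<in> wheel_V n
                 \<and> {a,b} \<in> wheel_E n \<and> {b,c} \<in> wheel_E n \<and> {a,c} \<in> wheel_E n"
  proof
    assume "\<exists>i<n. e = {None, Some i}"
    then obtain i where i: "i < n" "e = {None, Some i}" by blast
    define k where "k = (i+1) mod n"
    have kn: "k < n" using i(1) unfolding k_def by simp
    have ne: "i \<noteq> k" using i(1) assms mod_succ[OF i(1)] unfolding k_def by auto
    have v: "None \<in> wheel_V n" "Some i \<in> wheel_V n" "Some k \<in> wheel_V n" using i(1) kn unfolding wheel_V_mem by auto
    have e1: "{None, Some i} \<in> wheel_E n" using i(1) unfolding wheel_E_mem by blast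
    have e2: "{Some i, Some k} \<in> wheel_E n" using i(1) unfolding wheel_E_mem k_def by blast
    have e3: "{None, Some k} \<in> wheel_E n" using kn unfolding wheel_E_mem by blast
    show ?thesis
      apply (rule exI[of _ None], rule exI[of _ "Some i"], rule exI[of _ "Some k"])
      using i(2) ne v e1 e2 e3 by simp
  next
    assume "\<exists>i<n. e = {Some i, Some ((i+1) mod n)}"
    then obtain i where i: "i < n" "e = {Some i, Some ((i+1) mod n)}" by blast
    define k where "k = (i+1) mod n"
    have kn: "k < n" using i(1) unfolding k_def by simp
    have ne: "i \<noteq> k" using i(1) assms mod_succ[OF i(1)] unfolding k_def by auto
    have v: "None \<in> wheel_V n" "Some i \<in> wheel_V n" "Some k \<in> wheel_V n" using i(1) kn unfolding wheel_V_mem by auto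
    have e1: "{Some i, None} \<in> wheel_E n" using i(1) unfolding wheel_E_mem by (metis insert_commute)
    have e2: "{Some i, Some k} \<in> wheel_E n" using i(1) unfolding wheel_E_mem k_def by blast
    have e3: "{Some k, None} \<in> wheel_E n" using kn unfolding wheel_E_mem by (metis insert_commute)
    show ?thesis
      apply (rule exI[of _ "Some i"], rule exI[of _ "Some k"], rule exI[of _ None])
      using i(2) ne v e1 e2 e3 unfolding k_def by simp
  qed
qed

lemma general_case:
  assumes n: "n = 2 * q + 1" "q \<ge> 2"
  shows "H_supermagic (cycle_V 3) (cycle_E 3) (copies_V m (wheel_V n)) (copies_E m (wheel_E n))"
proof (rule generic[of "wheel_V n" "wheel_E n" m "lvG m n" "leG m n" "m * (6 * n + 3 * q + 2) + 3 * m + 3"])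
  have n1: "q \<ge> 1" and n2: "n \<ge> 2" using n by auto
  show "finite (wheel_V n)" by (rule finite_wheel_V)
  show "finite (wheel_E n)" by (rule finite_wheel_E)
  show "\<forall>e\<in>wheel_E n. \<exists>u v. e = {u,v} \<and> u \<noteq> v \<and> u \<in> wheel_V n \<and> v \<in> wheel_V n"
    by (rule wheel_simple[OF n2])
  show "\<forall>j<m. \<forall>j'<m. \<forall>x\<in>wheel_V n. \<forall>x'\<in>wheel_V n. lvG m n j x = lvG m n j' x' \<longrightarrow> j = j' \<and> x = x'"
  proof (intro allI impI ballI)
    fix j j' x x' assume j: "j < m" "j' < m" and x: "x \<in> wheel_V n" "x' \<in> wheel_V n"
      and eq: "lvG m n j x = lvG m n j' x'"
    have "m * LVw n x + j = m * LVw n x' + j'" using eq unfolding lvG_def by simp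
    hence "LVw n x = LVw n x' \<and> j = j'" using mdm j by blast
    thus "j = j' \<and> x = x'" using LVw_inj x by blast
  qed
  show "\<forall>j<m. \<forall>j'<m. \<forall>e\<in>wheel_E n. \<forall>e'\<in>wheel_E n. leG m n j e = leG m n j' e' \<longrightarrow> j = j' \<and> e = e'"
  proof (intro allI impI ballI)
    fix j j' e e' assume j: "j < m" "j' < m" and e: "e \<in> wheel_E n" "e' \<in> wheel_E n"
      and eq: "leG m n j e = leG m n j' e'"
    have "m * LEw n e + (m - 1 - j) = m * LEw n e' + (m - 1 - j')" using eq j unfolding leG_def by simp
    moreover have "m - 1 - j < m" "m - 1 - j' < m" using j by auto
    ultimately have "LEw n e = LEw n e' \<and> m - 1 - j = m - 1 - j'" using mdm by blast
    thus "j = j' \<and> e = e'" using LEw_inj[OF n(1) n1 e] j by auto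
  qed
  show "\<forall>j<m. \<forall>x\<in>wheel_V n. 1 \<le> lvG m n j x \<and> lvG m n j x \<le> m * card (wheel_V n)"
  proof (intro allI impI ballI)
    fix j x assume j: "j < m" and x: "x \<in> wheel_V n"
    have a: "m * LVw n x \<le> m * n" using LVw_range[OF x] by (rule mult_le_mono2)
    have b: "m * (n + 1) = m * n + m" by (simp add: algebra_simps)
    show "1 \<le> lvG m n j x \<and> lvG m n j x \<le> m * card (wheel_V n)"
      unfolding lvG_def card_wheel_V using j a b by linarith
  qed
  show "\<forall>j<m. \<forall>e\<in>wheel_E n. m * card (wheel_V n) < leG m n j e \<and> leG m n j e \<le> m * card (wheel_V n) + m * card (wheel_E n)"
  proof (intro allI impI ballI)
    fix j e assume j: "j < m" and e: "e \<in> wheel_E n"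
    note r = LEw_range[OF n(1) n1 e]
    have a: "m * (n + 1) \<le> m * LEw n e" using r by (intro mult_le_mono2) simp
    have b: "m * LEw n e \<le> m * (3 * n)" using r by (intro mult_le_mono2) simp
    have c: "m * (n + 1) + m * (2 * n) = m * (3 * n) + m" by (simp add: algebra_simps)
    show "m * card (wheel_V n) < leG m n j e \<and> leG m n j e \<le> m * card (wheel_V n) + m * card (wheel_E n)"
      unfolding leG_def card_wheel_V card_wheel_E[OF n(1) n1] using j a b c by linarith
  qed
  show "\<forall>e\<in>wheel_E n. \<exists>a b c. e = {a,b} \<and> a \<noteq> b \<and> b \<noteq> c \<and> a \<noteq> c \<and> a \<in> wheel_V n \<and> b \<in> wheel_V n \<and> c \<in> wheel_V n
                 \<and> {a,b} \<in> wheel_E n \<and> {b,c} \<in> wheel_E n \<and> {a,c} \<in> wheel_E n"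
    by (rule wheel_cover[OF n2])
  show "\<forall>j<m. \<forall>a b c. a \<noteq> b \<and> b \<noteq> c \<and> a \<noteq> c \<and> a \<in> wheel_V n \<and> b \<in> wheel_V n \<and> c \<in> wheel_V n
                 \<and> {a,b} \<in> wheel_E n \<and> {b,c} \<in> wheel_E n \<and> {a,c} \<in> wheel_E n \<longrightarrow>
                 lvG m n j a + lvG m n j b + lvG m n j c + leG m n j {a,b} + leG m n j {b,c} + leG m n j {a,c}
                 = m * (6 * n + 3 * q + 2) + 3 * m + 3"
  proof (intro allI impI)
    fix j a b c assume j: "j < m" and h: "a \<noteq> b \<and> b \<noteq> c \<and> a \<noteq> c \<and> a \<in> wheel_V n \<and> b \<in> wheel_V n \<and> c \<in> wheel_V n
                 \<and> {a,b} \<in> wheel_E n \<and> {b,c} \<in> wheel_E n \<and> {a,c} \<in> wheel_E n"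
    have L: "LVw n a + LVw n b + LVw n c + LEw n {a,b} + LEw n {b,c} + LEw n {a,c} = 6 * n + 3 * q + 2"
      using tri_levels[OF n] h by blast
    have "m * (LVw n a + LVw n b + LVw n c + LEw n {a,b} + LEw n {b,c} + LEw n {a,c})
          = m * (6 * n + 3 * q + 2)" using L by simp
    hence dist: "m * LVw n a + m * LVw n b + m * LVw n c + m * LEw n {a,b} + m * LEw n {b,c} + m * LEw n {a,c}
          = m * (6 * n + 3 * q + 2)" by (simp add: algebra_simps)
    have mj: "m - j + j = m" using j by simp
    show "lvG m n j a + lvG m n j b + lvG m n j c + leG m n j {a,b} + leG m n j {b,c} + leG m n j {a,c}
                 = m * (6 * n + 3 * q + 2) + 3 * m + 3"
      unfolding lvG_def leG_def using dist mj by linarith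
  qed
qed

definition tA :: "nat \<Rightarrow> nat \<Rightarrow> nat" where
  "tA s k = [[0,3,5,6,16,19,9,8,17,12],[1,2,4,7,18,15,10,11,13,14::nat]] ! s ! k"

definition tB :: "nat \<Rightarrow> nat \<Rightarrow> nat" where
  "tB t k = [[0,1,5,10,19,29,22,24,26,12],[2,3,6,11,27,23,15,17,20,21],[4,7,8,9,28,18,14,13,16,25::nat]] ! t ! k"

definition dA :: "nat \<Rightarrow> nat \<times> nat" where
  "dA L = [(0,0),(1,0),(1,1),(0,1),(1,2),(0,2),(0,3),(1,3),(0,7),(0,6),(1,6),(1,7),(0,9),(1,8),(1,9),(1,5),(0,4),(0,8),(1,4),(0,5)] ! L"

definition dB :: "nat \<Rightarrow> nat \<times> nat" where
  "dB L = [(0,0),(0,1),(1,0),(1,1),(2,0),(0,2),(1,2),(2,1),(2,2),(2,3),(0,3),(1,3),(0,9),(2,7),(2,6),(1,6),(2,8),(1,7),(2,5),(0,4),(1,8),(1,9),(0,6),(1,5),(0,7),(2,9),(0,8),(1,4),(2,4),(0,5)] ! L"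

lemma lt2_cases: "(s::nat) < 2 \<Longrightarrow> s = 0 \<or> s = 1" by arith
lemma lt3_cases: "(s::nat) < 3 \<Longrightarrow> s = 0 \<or> s = 1 \<or> s = 2" by arith
lemma lt4_cases: "(s::nat) < 4 \<Longrightarrow> s = 0 \<or> s = 1 \<or> s = 2 \<or> s = 3" by arith
lemma lt10_cases: "(k::nat) < 10 \<Longrightarrow> k = 0 \<or> k = 1 \<or> k = 2 \<or> k = 3 \<or> k = 4 \<or> k = 5 \<or> k = 6 \<or> k = 7 \<or> k = 8 \<or> k = 9" by arith

lemma dA_tA: "s < 2 \<Longrightarrow> k < 10 \<Longrightarrow> dA (tA s k) = (s,k)"
  by (elim lt2_cases[elim_format] lt10_cases[elim_format] disjE) (simp_all add: dA_def tA_def)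

lemma dB_tB: "t < 3 \<Longrightarrow> k < 10 \<Longrightarrow> dB (tB t k) = (t,k)"
  by (elim lt3_cases[elim_format] lt10_cases[elim_format] disjE) (simp_all add: dB_def tB_def)

lemma tA_range: "s < 2 \<Longrightarrow> k < 10 \<Longrightarrow> (k < 4 \<longrightarrow> tA s k < 8) \<and> (4 \<le> k \<longrightarrow> 8 \<le> tA s k \<and> tA s k < 20)"
  by (elim lt2_cases[elim_format] lt10_cases[elim_format] disjE) (simp_all add: tA_def)

lemma tB_range: "t < 3 \<Longrightarrow> k < 10 \<Longrightarrow> (k < 4 \<longrightarrow> tB t k < 12) \<and> (4 \<le> k \<longrightarrow> 12 \<le> tB t k \<and> tB t k < 30)"
  by (elim lt3_cases[elim_format] lt10_cases[elim_format] disjE) (simp_all add: tB_def)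

definition ec3 :: "nat \<Rightarrow> nat \<Rightarrow> nat" where
  "ec3 u v = (if u = 0 then 3 + v else if v = 0 then 3 + u else 4 + u + v)"

lemma triA: "s < 2 \<Longrightarrow> u < 4 \<Longrightarrow> v < 4 \<Longrightarrow> w < 4 \<Longrightarrow> u \<noteq> v \<Longrightarrow> v \<noteq> w \<Longrightarrow> u \<noteq> w \<Longrightarrow>
  tA s u div 2 + tA s v div 2 + tA s w div 2 + tA s (ec3 u v) div 2 + tA s (ec3 v w) div 2 + tA s (ec3 u w) div 2 = 24 \<and>
  tA s u mod 2 + tA s v mod 2 + tA s w mod 2 + tA s (ec3 u v) mod 2 + tA s (ec3 v w) mod 2 + tA s (ec3 u w) mod 2 = 3"
  by (elim lt2_cases[elim_format] lt4_cases[elim_format] disjE) (simp_all add: tA_def ec3_def)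

lemma triB: "t < 3 \<Longrightarrow> u < 4 \<Longrightarrow> v < 4 \<Longrightarrow> w < 4 \<Longrightarrow> u \<noteq> v \<Longrightarrow> v \<noteq> w \<Longrightarrow> u \<noteq> w \<Longrightarrow>
  tB t u div 3 + tB t v div 3 + tB t w div 3 + tB t (ec3 u v) div 3 + tB t (ec3 v w) div 3 + tB t (ec3 u w) div 3 = 24 \<and>
  tB t u mod 3 + tB t v mod 3 + tB t w mod 3 + tB t (ec3 u v) mod 3 + tB t (ec3 v w) mod 3 + tB t (ec3 u w) mod 3 = 6"
  by (elim lt3_cases[elim_format] lt4_cases[elim_format] disjE) (simp_all add: tB_def ec3_def)

definition bb :: "nat \<Rightarrow> nat" where "bb m = (if odd m then 3 else 0)"
definition zz :: "nat \<Rightarrow> nat" where "zz m = (m - bb m) div 2"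

definition Q3 :: "nat \<Rightarrow> nat \<Rightarrow> nat \<Rightarrow> nat" where
  "Q3 m j k = (if j < 2 * zz m then tA (j div zz m) k div 2 else tB (j - 2 * zz m) k div 3)"

definition P3 :: "nat \<Rightarrow> nat \<Rightarrow> nat \<Rightarrow> nat" where
  "P3 m j k = (if j < 2 * zz m then (zz m + bb m) * (tA (j div zz m) k mod 2)
                  + (if k < 4 then j mod zz m else zz m - 1 - j mod zz m)
               else zz m + tB (j - 2 * zz m) k mod 3)"

definition lab3 :: "nat \<Rightarrow> nat \<Rightarrow> nat \<Rightarrow> nat" where
  "lab3 m j k = m * Q3 m j k + P3 m j k + 1"

lemma mz:
  assumes "m \<ge> 2"
  shows "m = 2 * zz m + bb m \<and> (bb m = 0 \<or> bb m = 3) \<and> (bb m \<noteq> 0 \<longrightarrow> bb m = 3)"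
proof (cases "odd m")
  case True
  then obtain t where t: "m = 2 * t + 1" using oddE by blast
  hence t1: "t \<ge> 1" using assms by simp
  have b: "bb m = 3" using True unfolding bb_def by simp
  have "m - 3 = 2 * (t - 1)" using t t1 by simp
  hence z: "zz m = t - 1" unfolding zz_def b by simp
  show ?thesis using b z t t1 by simp
next
  case False
  thus ?thesis unfolding zz_def bb_def by simp
qed

lemma jA:
  assumes "j < 2 * zz m"
  shows "zz m > 0 \<and> j div zz m < 2 \<and> j mod zz m < zz m \<and> j = zz m * (j div zz m) + j mod zz m"
proof -
  have z: "zz m > 0" using assms by (cases "zz m = 0") auto
  have "j div zz m < 2" using assms z by (simp add: div_less_iff_less_mult mult.commute)
  thus ?thesis using z by simp
qed

lemma jB:
  assumes "m \<ge> 2" "j < m" "\<not> j < 2 * zz m"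
  shows "bb m = 3 \<and> j - 2 * zz m < 3"
proof -
  note h = mz[OF assms(1)]
  have "bb m \<noteq> 0" using h assms(2,3) by auto
  hence "bb m = 3" using h by auto
  thus ?thesis using h assms(2,3) by auto
qed

lemma P3_bound:
  assumes "m \<ge> 2" "j < m" "k < 10"
  shows "P3 m j k < m"
proof (cases "j < 2 * zz m")
  case True
  note a = jA[OF True]
  note h = mz[OF assms(1)]
  define hh pp where "hh = tA (j div zz m) k mod 2" and "pp = (if k < 4 then j mod zz m else zz m - 1 - j mod zz m)"
  have hb: "hh \<le> 1" unfolding hh_def by simp
  have c1: "(zz m + bb m) * hh \<le> zz m + bb m" using mult_le_mono2[OF hb, of "zz m + bb m"] by simp
  have c2: "pp < zz m" using a unfolding pp_def by auto
  have "P3 m j k = (zz m + bb m) * hh + pp" unfolding P3_def hh_def pp_def using True by simp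
  thus ?thesis using c1 c2 h[THEN conjunct1] by linarith
next
  case False
  note b = jB[OF assms(1,2) False]
  note h = mz[OF assms(1)]
  have r: "tB (j - 2 * zz m) k mod 3 < 3" by simp
  have "P3 m j k = zz m + tB (j - 2 * zz m) k mod 3" unfolding P3_def using False by simp
  thus ?thesis using r b h[THEN conjunct1] by linarith
qed

lemma lab3_inj:
  assumes m: "m \<ge> 2" and j: "j < m" "j' < m" and k: "k < 10" "k' < 10"
    and eq: "lab3 m j k = lab3 m j' k'"
  shows "j = j' \<and> k = k'"
proof -
  note h = mz[OF m]
  have "m * Q3 m j k + P3 m j k = m * Q3 m j' k' + P3 m j' k'" using eq unfolding lab3_def by simp
  hence QP: "Q3 m j k = Q3 m j' k' \<and> P3 m j k = P3 m j' k'"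
    using mdm P3_bound[OF m j(1) k(1)] P3_bound[OF m j(2) k(2)] by blast
  define z b where "z = zz m" and "b = bb m"
  show ?thesis
  proof (cases "j < 2 * z")
    case A1: True
    note a = jA[OF A1[unfolded z_def]]
    define s i L where "s = j div z" and "i = j mod z" and "L = tA s k"
    have s2: "s < 2" and iz: "i < z" and jsi: "j = z * s + i" using a unfolding s_def i_def z_def by auto
    have Pj: "P3 m j k = (z + b) * (L mod 2) + (if k < 4 then i else z - 1 - i)"
      unfolding P3_def using A1 unfolding z_def b_def s_def i_def L_def by simp
    have Qj: "Q3 m j k = L div 2" unfolding Q3_def using A1 unfolding z_def s_def L_def by simp
    have pi: "(if k < 4 then i else z - 1 - i) < z" using iz by auto
    show ?thesis
    proof (cases "j' < 2 * z")
      case A2: True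
      note a' = jA[OF A2[unfolded z_def]]
      define s' i' L' where "s' = j' div z" and "i' = j' mod z" and "L' = tA s' k'"
      have s2': "s' < 2" and iz': "i' < z" and jsi': "j' = z * s' + i'" using a' unfolding s'_def i'_def z_def by auto
      have Pj': "P3 m j' k' = (z + b) * (L' mod 2) + (if k' < 4 then i' else z - 1 - i')"
        unfolding P3_def using A2 unfolding z_def b_def s'_def i'_def L'_def by simp
      have Qj': "Q3 m j' k' = L' div 2" unfolding Q3_def using A2 unfolding z_def s'_def L'_def by simp
      have pi': "(if k' < 4 then i' else z - 1 - i') < z" using iz' by auto
      have hh: "L mod 2 = L' mod 2"
      proof (rule ccontr)
        assume ne: "L mod 2 \<noteq> L' mod 2"
        have "L mod 2 = 0 \<or> L mod 2 = 1" "L' mod 2 = 0 \<or> L' mod 2 = 1" by auto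
        thus False using ne QP Pj Pj' pi pi' by auto
      qed
      have pe: "(if k < 4 then i else z - 1 - i) = (if k' < 4 then i' else z - 1 - i')"
        using QP Pj Pj' hh by simp
      have "L div 2 = L' div 2" using QP Qj Qj' by simp
      hence "L = L'" using hh by (metis div_mult_mod_eq)
      hence "dA L = dA L'" by simp
      hence sk: "s = s' \<and> k = k'" using dA_tA[OF s2 k(1)] dA_tA[OF s2' k(2)] unfolding L_def L'_def by simp
      hence "i = i'" using pe iz iz' by (auto split: if_splits)
      thus ?thesis using sk jsi jsi' by simp
    next
      case B2: False
      note b' = jB[OF m j(2) B2[unfolded z_def]]
      have Pj': "P3 m j' k' = z + tB (j' - 2 * z) k' mod 3" unfolding P3_def using B2 unfolding z_def by simp
      have r3: "tB (j' - 2 * z) k' mod 3 < 3" by simp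
      have b3: "b = 3" using b' unfolding b_def by simp
      have "L mod 2 = 0 \<or> L mod 2 = 1" by auto
      hence "P3 m j k < z \<or> P3 m j k \<ge> z + 3" using Pj pi b3 by auto
      moreover have "z \<le> P3 m j' k' \<and> P3 m j' k' < z + 3" using Pj' r3 by simp
      ultimately show ?thesis using QP by simp
    qed
  next
    case B1: False
    note b1 = jB[OF m j(1) B1[unfolded z_def]]
    define t L where "t = j - 2 * z" and "L = tB t k"
    have t3: "t < 3" using b1 unfolding t_def z_def by simp
    have Pj: "P3 m j k = z + L mod 3" unfolding P3_def using B1 unfolding z_def t_def L_def by simp
    have Qj: "Q3 m j k = L div 3" unfolding Q3_def using B1 unfolding z_def t_def L_def by simp
    have r3: "L mod 3 < 3" by simp
    show ?thesis
    proof (cases "j' < 2 * z")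
      case A2: True
      note a' = jA[OF A2[unfolded z_def]]
      define s' i' L' where "s' = j' div z" and "i' = j' mod z" and "L' = tA s' k'"
      have iz': "i' < z" using a' unfolding i'_def z_def by auto
      have Pj': "P3 m j' k' = (z + b) * (L' mod 2) + (if k' < 4 then i' else z - 1 - i')"
        unfolding P3_def using A2 unfolding z_def b_def s'_def i'_def L'_def by simp
      have pi': "(if k' < 4 then i' else z - 1 - i') < z" using iz' by auto
      have b3: "b = 3" using b1 unfolding b_def by simp
      have "L' mod 2 = 0 \<or> L' mod 2 = 1" by auto
      hence "P3 m j' k' < z \<or> P3 m j' k' \<ge> z + 3" using Pj' pi' b3 by auto
      moreover have "z \<le> P3 m j k \<and> P3 m j k < z + 3" using Pj r3 by simp
      ultimately show ?thesis using QP by simp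
    next
      case B2: False
      note b2 = jB[OF m j(2) B2[unfolded z_def]]
      define t' L' where "t' = j' - 2 * z" and "L' = tB t' k'"
      have t3': "t' < 3" using b2 unfolding t'_def z_def by simp
      have Pj': "P3 m j' k' = z + L' mod 3" unfolding P3_def using B2 unfolding z_def t'_def L'_def by simp
      have Qj': "Q3 m j' k' = L' div 3" unfolding Q3_def using B2 unfolding z_def t'_def L'_def by simp
      have "L mod 3 = L' mod 3" using QP Pj Pj' by simp
      moreover have "L div 3 = L' div 3" using QP Qj Qj' by simp
      ultimately have "L = L'" by (metis div_mult_mod_eq)
      hence "dB L = dB L'" by simp
      hence tk: "t = t' \<and> k = k'" using dB_tB[OF t3 k(1)] dB_tB[OF t3' k(2)] unfolding L_def L'_def by simp
      thus ?thesis using B1 B2 unfolding t_def t'_def by arith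
    qed
  qed
qed

lemma Q3_range:
  assumes m: "m \<ge> 2" and j: "j < m" and k: "k < 10"
  shows "(k < 4 \<longrightarrow> Q3 m j k < 4) \<and> (4 \<le> k \<longrightarrow> 4 \<le> Q3 m j k \<and> Q3 m j k < 10)"
proof (cases "j < 2 * zz m")
  case True
  note a = jA[OF True]
  have s2: "j div zz m < 2" using a by simp
  note r = tA_range[OF s2 k]
  define L where "L = tA (j div zz m) k"
  have Q: "Q3 m j k = L div 2" unfolding Q3_def L_def using True by simp
  have rr: "(k < 4 \<longrightarrow> L < 8) \<and> (4 \<le> k \<longrightarrow> 8 \<le> L \<and> L < 20)" using r unfolding L_def .
  show ?thesis unfolding Q
  proof (intro conjI impI)
    assume "k < 4" hence "L < 8" using rr by simp
    thus "L div 2 < 4" using div_less_iff_less_mult[of 2 L 4] by simp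
  next
    assume "4 \<le> k" hence "8 \<le> L" using rr by simp
    thus "4 \<le> L div 2" using div_le_mono[of 8 L 2] by simp
  next
    assume "4 \<le> k" hence "L < 20" using rr by simp
    thus "L div 2 < 10" using div_less_iff_less_mult[of 2 L 10] by simp
  qed
next
  case False
  note b = jB[OF m j False]
  have t3: "j - 2 * zz m < 3" using b by simp
  note r = tB_range[OF t3 k]
  define L where "L = tB (j - 2 * zz m) k"
  have Q: "Q3 m j k = L div 3" unfolding Q3_def L_def using False by simp
  have rr: "(k < 4 \<longrightarrow> L < 12) \<and> (4 \<le> k \<longrightarrow> 12 \<le> L \<and> L < 30)" using r unfolding L_def .
  show ?thesis unfolding Q
  proof (intro conjI impI)
    assume "k < 4" hence "L < 12" using rr by simp
    thus "L div 3 < 4" using div_less_iff_less_mult[of 3 L 4] by simp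
  next
    assume "4 \<le> k" hence "12 \<le> L" using rr by simp
    thus "4 \<le> L div 3" using div_le_mono[of 12 L 3] by simp
  next
    assume "4 \<le> k" hence "L < 30" using rr by simp
    thus "L div 3 < 10" using div_less_iff_less_mult[of 3 L 10] by simp
  qed
qed

lemma lab3_range:
  assumes m: "m \<ge> 2" and j: "j < m" and k: "k < 10"
  shows "(k < 4 \<longrightarrow> 1 \<le> lab3 m j k \<and> lab3 m j k \<le> 4 * m) \<and>
         (4 \<le> k \<longrightarrow> 4 * m < lab3 m j k \<and> lab3 m j k \<le> 10 * m)"
proof -
  note q = Q3_range[OF m j k]
  note p = P3_bound[OF m j k]
  show ?thesis
  proof (intro conjI impI)
    assume "k < 4"
    hence "Q3 m j k \<le> 3" using q by simp
    hence "m * Q3 m j k \<le> m * 3" by (rule mult_le_mono2)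
    thus "1 \<le> lab3 m j k" "lab3 m j k \<le> 4 * m" unfolding lab3_def using p by linarith+
  next
    assume "4 \<le> k"
    hence q1: "4 \<le> Q3 m j k" "Q3 m j k \<le> 9" using q by auto
    have "m * 4 \<le> m * Q3 m j k" using q1(1) by (rule mult_le_mono2)
    moreover have "m * Q3 m j k \<le> m * 9" using q1(2) by (rule mult_le_mono2)
    ultimately show "4 * m < lab3 m j k" "lab3 m j k \<le> 10 * m" unfolding lab3_def using p by linarith+
  qed
qed

lemma ec3_range: "u < 4 \<Longrightarrow> v < 4 \<Longrightarrow> u \<noteq> v \<Longrightarrow> 4 \<le> ec3 u v \<and> ec3 u v < 10"
  unfolding ec3_def by auto

lemma lab3_tri:
  assumes m: "m \<ge> 2" and j: "j < m" and uvw: "u < 4" "v < 4" "w < 4" "u \<noteq> v" "v \<noteq> w" "u \<noteq> w"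
  shows "lab3 m j u + lab3 m j v + lab3 m j w + lab3 m j (ec3 u v) + lab3 m j (ec3 v w) + lab3 m j (ec3 u w) = 27 * m + 3"
proof -
  note h = mz[OF m]
  define z b where "z = zz m" and "b = bb m"
  have mzb: "m = 2 * z + b" using h unfolding z_def b_def by simp
  have c1: "4 \<le> ec3 u v" and c2: "4 \<le> ec3 v w" and c3: "4 \<le> ec3 u w"
    using ec3_range uvw by auto
  show ?thesis
  proof (cases "j < 2 * z")
    case True
    note a = jA[OF True[unfolded z_def]]
    define s i where "s = j div z" and "i = j mod z"
    have s2: "s < 2" and iz: "i < z" using a unfolding s_def i_def z_def by auto
    have e: "\<And>k. lab3 m j k = m * (tA s k div 2) + (z + b) * (tA s k mod 2) + (if k < 4 then i else z - 1 - i) + 1"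
      unfolding lab3_def Q3_def P3_def using True unfolding z_def b_def s_def i_def by simp
    note tr = triA[OF s2 uvw]
    have d: "m * (tA s u div 2) + m * (tA s v div 2) + m * (tA s w div 2) + m * (tA s (ec3 u v) div 2)
             + m * (tA s (ec3 v w) div 2) + m * (tA s (ec3 u w) div 2) = m * 24"
      using arg_cong[OF tr[THEN conjunct1], of "\<lambda>x. m * x"] by (simp only: distrib_left)
    have md: "(z + b) * (tA s u mod 2) + (z + b) * (tA s v mod 2) + (z + b) * (tA s w mod 2) + (z + b) * (tA s (ec3 u v) mod 2)
             + (z + b) * (tA s (ec3 v w) mod 2) + (z + b) * (tA s (ec3 u w) mod 2) = (z + b) * 3"
      using arg_cong[OF tr[THEN conjunct2], of "\<lambda>x. (z + b) * x"] by (simp only: distrib_left)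
    have pi: "z - 1 - i + i = z - 1" "z \<ge> 1" "z - 1 + 1 = z" using iz by auto
    have i1: "(if u < 4 then i else z - 1 - i) = i" "(if v < 4 then i else z - 1 - i) = i"
      "(if w < 4 then i else z - 1 - i) = i" using uvw by auto
    have i2: "(if ec3 u v < 4 then i else z - 1 - i) = z - 1 - i" "(if ec3 v w < 4 then i else z - 1 - i) = z - 1 - i"
      "(if ec3 u w < 4 then i else z - 1 - i) = z - 1 - i" using c1 c2 c3 by auto
    have zb: "(z + b) * 3 = 3 * z + 3 * b" by simp
    show ?thesis unfolding e i1 i2 using d md pi mzb zb by linarith
  next
    case False
    note b1 = jB[OF m j False[unfolded z_def]]
    define t where "t = j - 2 * z"
    have t3: "t < 3" and b3: "b = 3" using b1 unfolding t_def z_def b_def by auto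
    have e: "\<And>k. lab3 m j k = m * (tB t k div 3) + z + tB t k mod 3 + 1"
      unfolding lab3_def Q3_def P3_def using False unfolding z_def t_def by simp
    note tr = triB[OF t3 uvw]
    have d: "m * (tB t u div 3) + m * (tB t v div 3) + m * (tB t w div 3) + m * (tB t (ec3 u v) div 3)
             + m * (tB t (ec3 v w) div 3) + m * (tB t (ec3 u w) div 3) = m * 24"
      using arg_cong[OF tr[THEN conjunct1], of "\<lambda>x. m * x"] by (simp only: distrib_left)
    have tr2: "tB t u mod 3 + tB t v mod 3 + tB t w mod 3 + tB t (ec3 u v) mod 3 + tB t (ec3 v w) mod 3 + tB t (ec3 u w) mod 3 = 6"
      using tr by simp
    show ?thesis unfolding e using d tr2 mzb b3 by linarith
  qed
qed

definition vcode :: "nat option \<Rightarrow> nat" where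
  "vcode x = (case x of None \<Rightarrow> 0 | Some k \<Rightarrow> k + 1)"

definition ecode :: "nat option set \<Rightarrow> nat" where
  "ecode e = (if None \<in> e then 4 + esum e else 6 + esum e)"

lemma vcode_inj: "vcode x = vcode y \<Longrightarrow> x = y"
  unfolding vcode_def by (cases x; cases y) auto

lemma vcode_lt: "x \<in> wheel_V 3 \<Longrightarrow> vcode x < 4"
  unfolding wheel_V_mem vcode_def by auto

lemma ecode_pair: "x \<noteq> y \<Longrightarrow> ecode {x,y} = ec3 (vcode x) (vcode y)"
proof (cases x)
  case None
  assume "x \<noteq> y"
  then obtain k where "y = Some k" using None by (cases y) auto
  thus ?thesis using None unfolding ecode_def ec3_def vcode_def by (simp add: esum_spoke)
next
  case (Some a)
  assume ne: "x \<noteq> y"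
  show ?thesis
  proof (cases y)
    case None
    thus ?thesis using Some unfolding ecode_def ec3_def vcode_def by (simp add: esum_spoke')
  next
    case (Some b)
    hence "a \<noteq> b" using ne \<open>x = Some a\<close> by simp
    thus ?thesis using Some \<open>x = Some a\<close> unfolding ecode_def ec3_def vcode_def by (simp add: esum_rim)
  qed
qed

lemma ec3_inj: "u < 4 \<Longrightarrow> v < 4 \<Longrightarrow> u' < 4 \<Longrightarrow> v' < 4 \<Longrightarrow> u \<noteq> v \<Longrightarrow> u' \<noteq> v' \<Longrightarrow>
   ec3 u v = ec3 u' v' \<Longrightarrow> (u = u' \<and> v = v') \<or> (u = v' \<and> v = u')"
  by (elim lt4_cases[elim_format] disjE) (simp_all add: ec3_def)

definition lv3 :: "nat \<Rightarrow> nat \<Rightarrow> nat option \<Rightarrow> nat" where "lv3 m j x = lab3 m j (vcode x)"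
definition le3 :: "nat \<Rightarrow> nat \<Rightarrow> nat option set \<Rightarrow> nat" where "le3 m j e = lab3 m j (ecode e)"

lemma ecode_range3:
  assumes "e \<in> wheel_E 3"
  shows "4 \<le> ecode e \<and> ecode e < 10"
proof -
  obtain x y where xy: "e = {x,y}" "x \<noteq> y" "x \<in> wheel_V 3" "y \<in> wheel_V 3"
    using wheel_simple[of 3] assms by auto
  have "ecode e = ec3 (vcode x) (vcode y)" using xy ecode_pair by simp
  moreover have "vcode x \<noteq> vcode y" using xy(2) vcode_inj by blast
  ultimately show ?thesis using ec3_range vcode_lt xy(3,4) by simp
qed

lemma ecode_inj3:
  assumes "e \<in> wheel_E 3" "e' \<in> wheel_E 3" "ecode e = ecode e'"
  shows "e = e'"
proof -
  obtain x y where xy: "e = {x,y}" "x \<noteq> y" "x \<in> wheel_V 3" "y \<in> wheel_V 3"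
    using wheel_simple[of 3] assms(1) by auto
  obtain x' y' where xy': "e' = {x',y'}" "x' \<noteq> y'" "x' \<in> wheel_V 3" "y' \<in> wheel_V 3"
    using wheel_simple[of 3] assms(2) by auto
  have d: "vcode x \<noteq> vcode y" "vcode x' \<noteq> vcode y'" using xy(2) xy'(2) vcode_inj by blast+
  have "ec3 (vcode x) (vcode y) = ec3 (vcode x') (vcode y')" using assms(3) xy xy' ecode_pair by simp
  hence "(vcode x = vcode x' \<and> vcode y = vcode y') \<or> (vcode x = vcode y' \<and> vcode y = vcode x')"
    using ec3_inj vcode_lt xy(3,4) xy'(3,4) d by blast
  hence "(x = x' \<and> y = y') \<or> (x = y' \<and> y = x')" using vcode_inj by blast
  thus ?thesis using xy(1) xy'(1) by blast
qed

lemma case3: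
  assumes m: "m \<ge> 2"
  shows "H_supermagic (cycle_V 3) (cycle_E 3) (copies_V m (wheel_V 3)) (copies_E m (wheel_E 3))"
proof (rule generic[of "wheel_V 3" "wheel_E 3" m "lv3 m" "le3 m" "27 * m + 3"])
  have cV: "card (wheel_V 3) = 4" using card_wheel_V[of 3] by simp
  have cE: "card (wheel_E 3) = 6" using card_wheel_E[of 3 1] by simp
  show "finite (wheel_V 3)" by (rule finite_wheel_V)
  show "finite (wheel_E 3)" by (rule finite_wheel_E)
  show "\<forall>e\<in>wheel_E 3. \<exists>u v. e = {u,v} \<and> u \<noteq> v \<and> u \<in> wheel_V 3 \<and> v \<in> wheel_V 3"
    by (rule wheel_simple) simp
  show "\<forall>j<m. \<forall>j'<m. \<forall>x\<in>wheel_V 3. \<forall>x'\<in>wheel_V 3. lv3 m j x = lv3 m j' x' \<longrightarrow> j = j' \<and> x = x'"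
  proof (intro allI impI ballI)
    fix j j' x x' assume j: "j < m" "j' < m" and x: "x \<in> wheel_V 3" "x' \<in> wheel_V 3"
      and eq: "lv3 m j x = lv3 m j' x'"
    have "vcode x < 4" "vcode x' < 4" using vcode_lt x by auto
    hence "vcode x < 10" "vcode x' < 10" by simp_all
    hence "j = j' \<and> vcode x = vcode x'" using lab3_inj[OF m j] eq unfolding lv3_def by blast
    thus "j = j' \<and> x = x'" using vcode_inj by blast
  qed
  show "\<forall>j<m. \<forall>j'<m. \<forall>e\<in>wheel_E 3. \<forall>e'\<in>wheel_E 3. le3 m j e = le3 m j' e' \<longrightarrow> j = j' \<and> e = e'"
  proof (intro allI impI ballI)
    fix j j' e e' assume j: "j < m" "j' < m" and e: "e \<in> wheel_E 3" "e' \<in> wheel_E 3"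
      and eq: "le3 m j e = le3 m j' e'"
    have "ecode e < 10" "ecode e' < 10" using ecode_range3 e by auto
    hence "j = j' \<and> ecode e = ecode e'" using lab3_inj[OF m j] eq unfolding le3_def by blast
    thus "j = j' \<and> e = e'" using ecode_inj3 e by blast
  qed
  show "\<forall>j<m. \<forall>x\<in>wheel_V 3. 1 \<le> lv3 m j x \<and> lv3 m j x \<le> m * card (wheel_V 3)"
  proof (intro allI impI ballI)
    fix j x assume j: "j < m" and x: "x \<in> wheel_V 3"
    have v: "vcode x < 4" using vcode_lt x by simp
    hence "vcode x < 10" by simp
    note r = lab3_range[OF m j this]
    show "1 \<le> lv3 m j x \<and> lv3 m j x \<le> m * card (wheel_V 3)"
      unfolding lv3_def cV using r v by simp
  qed
  show "\<forall>j<m. \<forall>e\<in>wheel_E 3. m * card (wheel_V 3) < le3 m j e \<and> le3 m j e \<le> m * card (wheel_V 3) + m * card (wheel_E 3)"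
  proof (intro allI impI ballI)
    fix j e assume j: "j < m" and e: "e \<in> wheel_E 3"
    have v: "4 \<le> ecode e" "ecode e < 10" using ecode_range3 e by auto
    note r = lab3_range[OF m j v(2)]
    show "m * card (wheel_V 3) < le3 m j e \<and> le3 m j e \<le> m * card (wheel_V 3) + m * card (wheel_E 3)"
      unfolding le3_def cV cE using r v by simp
  qed
  show "\<forall>e\<in>wheel_E 3. \<exists>a b c. e = {a,b} \<and> a \<noteq> b \<and> b \<noteq> c \<and> a \<noteq> c \<and> a \<in> wheel_V 3 \<and> b \<in> wheel_V 3 \<and> c \<in> wheel_V 3
                 \<and> {a,b} \<in> wheel_E 3 \<and> {b,c} \<in> wheel_E 3 \<and> {a,c} \<in> wheel_E 3"
    by (rule wheel_cover) simp
  show "\<forall>j<m. \<forall>a b c. a \<noteq> b \<and> b \<noteq> c \<and> a \<noteq> c \<and> a \<in> wheel_V 3 \<and> b \<in> wheel_V 3 \<and> c \<in> wheel_V 3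
                 \<and> {a,b} \<in> wheel_E 3 \<and> {b,c} \<in> wheel_E 3 \<and> {a,c} \<in> wheel_E 3 \<longrightarrow>
                 lv3 m j a + lv3 m j b + lv3 m j c + le3 m j {a,b} + le3 m j {b,c} + le3 m j {a,c} = 27 * m + 3"
  proof (intro allI impI)
    fix j a b c assume j: "j < m" and h: "a \<noteq> b \<and> b \<noteq> c \<and> a \<noteq> c \<and> a \<in> wheel_V 3 \<and> b \<in> wheel_V 3 \<and> c \<in> wheel_V 3
                 \<and> {a,b} \<in> wheel_E 3 \<and> {b,c} \<in> wheel_E 3 \<and> {a,c} \<in> wheel_E 3"
    have d: "vcode a \<noteq> vcode b" "vcode b \<noteq> vcode c" "vcode a \<noteq> vcode c" using h vcode_inj by blast+
    have l: "vcode a < 4" "vcode b < 4" "vcode c < 4" using h vcode_lt by blast+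
    have e: "ecode {a,b} = ec3 (vcode a) (vcode b)" "ecode {b,c} = ec3 (vcode b) (vcode c)"
      "ecode {a,c} = ec3 (vcode a) (vcode c)" using h ecode_pair by blast+
    show "lv3 m j a + lv3 m j b + lv3 m j c + le3 m j {a,b} + le3 m j {b,c} + le3 m j {a,c} = 27 * m + 3"
      unfolding lv3_def le3_def e using lab3_tri[OF m j l d] .
  qed
qed

theorem theorem5:
  fixes n m :: nat
  assumes "odd n" and "n \<ge> 3" and "m \<ge> 2"
  shows "H_supermagic (cycle_V 3) (cycle_E 3)
           (copies_V m (wheel_V n)) (copies_E m (wheel_E n))"
proof -
  obtain q where q: "n = 2 * q + 1" using assms(1) oddE by blast
  show ?thesis
  proof (cases "q = 1")
    case True
    hence "n = 3" using q by simp
    thus ?thesis using case3[OF assms(3)] by simp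
  next
    case False
    hence "q \<ge> 2" using q assms(2) by simp
    thus ?thesis using general_case[OF q] by simp
  qed
qed

end
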